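(* Let $\mathcal H$ be a separable Hilbert space, $A_0=B+\mathrm iC$ with $B$ self-adjoint and $C$ bounded with $C\ge\delta\mathbf 1$ for some $\delta>0$, and let $V$ be a bounded non-negative operator on $\mathcal H$. Then the restriction of $V^{1/2}A_0^{-1}V^{1/2}$ to $(\ker V)^\perp$ is injective, and the Birman–Schwinger operator $A_{BS}:=(V^{1/2}A_0^{-1}V^{1/2})^{-1}$ is a maximally dissipative operator in $(\ker V)^\perp$ with domain equal to the range of $V^{1/2}A_0^{-1}V^{1/2}$. Moreover, its resolvent set contains the closed lower half-plane $\overline{\mathbb C}_-=\{\xi:\mathrm{Im}\,\xi\le0\}$, and for every $\xi\in\overline{\mathbb C}_-$, $$(A_{BS}-\xi\mathbf 1)^{-1}=V^{1/2}(A_0-\xi V)^{-1}V^{1/2}\quad\text{on }(\ker V)^\perp.$$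
   Context: A densely defined operator $A$ is dissipative if $\mathrm{Im}\langle\varphi,A\varphi\rangle\ge0$ for all $\varphi$ in its domain, and maximally dissipative if it has no proper dissipative extension. *)

theory Defs
  imports "HOL-Analysis.Analysis"
begin

text \<open>A complex Hilbert space: a real Banach space carrying a complex scalar
multiplication (extending the real one) and a complex inner product which is
conjugate-linear in the FIRST and linear in the SECOND argument (physics
convention, as in the dissipativity condition Im <phi, A phi> >= 0), inducing the norm.\<close>

class chilbert = banach +
  fixes scaleC :: "complex \<Rightarrow> 'a \<Rightarrow> 'a" (infixr \<open>*\<^sub>C\<close> 75)
    and cinner :: "'a \<Rightarrow> 'a \<Rightarrow> complex"
  assumes scaleC_add_right: "a *\<^sub>C (x + y) = a *\<^sub>C x + a *\<^sub>C y"
    and scaleC_add_left: "(a + b) *\<^sub>C x = a *\<^sub>C x + b *\<^sub>C x"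
    and scaleC_scaleC: "a *\<^sub>C (b *\<^sub>C x) = (a * b) *\<^sub>C x"
    and scaleC_one: "1 *\<^sub>C x = x"
    and scaleC_of_real: "complex_of_real r *\<^sub>C x = scaleR r x"
    and cinner_commute: "cinner x y = cnj (cinner y x)"
    and cinner_add_right: "cinner x (y + z) = cinner x y + cinner x z"
    and cinner_scaleC_right: "cinner x (a *\<^sub>C y) = a * cinner x y"
    and cinner_self_norm: "cinner x x = complex_of_real ((norm x)\<^sup>2)"


text \<open>Sanity check: the class is inhabited (complex numbers as a 1-dimensional Hilbert space).\<close>
instantiation complex :: chilbert
begin
definition scaleC_complex :: "complex \<Rightarrow> complex \<Rightarrow> complex" where "scaleC_complex a x = a * x"
definition cinner_complex :: "complex \<Rightarrow> complex \<Rightarrow> complex" where "cinner_complex x y = cnj x * y"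
instance
proof
  fix a b :: complex and x y z :: complex and r :: real
  show "a *\<^sub>C (x + y) = a *\<^sub>C x + a *\<^sub>C y" by (simp add: scaleC_complex_def distrib_left)
  show "(a + b) *\<^sub>C x = a *\<^sub>C x + b *\<^sub>C x" by (simp add: scaleC_complex_def distrib_right)
  show "a *\<^sub>C (b *\<^sub>C x) = (a * b) *\<^sub>C x" by (simp add: scaleC_complex_def)
  show "1 *\<^sub>C x = x" by (simp add: scaleC_complex_def)
  show "complex_of_real r *\<^sub>C x = scaleR r x" by (simp add: scaleC_complex_def scaleR_conv_of_real)
  show "cinner x y = cnj (cinner y x)" by (simp add: cinner_complex_def mult.commute)
  show "cinner x (y + z) = cinner x y + cinner x z" by (simp add: cinner_complex_def distrib_left)
  show "cinner x (a *\<^sub>C y) = a * cinner x y" by (simp add: cinner_complex_def scaleC_complex_def)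
  show "cinner x x = complex_of_real ((norm x)\<^sup>2)"
    by (simp add: cinner_complex_def complex_norm_square mult.commute del: of_real_power)
qed
end

definition csubspace :: "'a::chilbert set \<Rightarrow> bool" where
  "csubspace S \<longleftrightarrow> 0 \<in> S \<and> (\<forall>x\<in>S. \<forall>y\<in>S. x + y \<in> S) \<and> (\<forall>a. \<forall>x\<in>S. a *\<^sub>C x \<in> S)"

definition clinear_on :: "'a::chilbert set \<Rightarrow> ('a \<Rightarrow> 'a) \<Rightarrow> bool" where
  "clinear_on S f \<longleftrightarrow> (\<forall>x\<in>S. \<forall>y\<in>S. f (x + y) = f x + f y) \<and> (\<forall>a. \<forall>x\<in>S. f (a *\<^sub>C x) = a *\<^sub>C f x)"

definition cbounded :: "('a::chilbert \<Rightarrow> 'a) \<Rightarrow> bool" where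
  "cbounded f \<longleftrightarrow> clinear_on UNIV f \<and> (\<exists>K. \<forall>x. norm (f x) \<le> K * norm x)"

definition nonneg_op :: "('a::chilbert \<Rightarrow> 'a) \<Rightarrow> bool" where
  "nonneg_op S \<longleftrightarrow> (\<forall>x. cinner x (S x) \<in> \<real> \<and> 0 \<le> Re (cinner x (S x)))"

definition op_sqrt :: "('a::chilbert \<Rightarrow> 'a) \<Rightarrow> 'a \<Rightarrow> 'a" where
  "op_sqrt V = (THE S. cbounded S \<and> nonneg_op S \<and> (\<forall>x. S (S x) = V x))"

definition ker :: "('a::chilbert \<Rightarrow> 'a) \<Rightarrow> 'a set" where
  "ker f = {x. f x = 0}"

definition orth_compl :: "'a::chilbert set \<Rightarrow> 'a set" where
  "orth_compl S = {x. \<forall>y\<in>S. cinner y x = 0}"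

definition adj_dom :: "'a::chilbert set \<Rightarrow> ('a \<Rightarrow> 'a) \<Rightarrow> 'a set" where
  "adj_dom D B = {y. \<exists>z. \<forall>x\<in>D. cinner y (B x) = cinner z x}"

text \<open>Self-adjoint (possibly unbounded) operator B with domain D in the whole space:
densely defined, linear, symmetric, and dom(B*) is contained in dom(B)
(so B* = B).\<close>
definition self_adjoint_op :: "'a::chilbert set \<Rightarrow> ('a \<Rightarrow> 'a) \<Rightarrow> bool" where
  "self_adjoint_op D B \<longleftrightarrow> csubspace D \<and> closure D = UNIV \<and> clinear_on D B \<and>
     (\<forall>x\<in>D. \<forall>y\<in>D. cinner (B x) y = cinner x (B y)) \<and> adj_dom D B \<subseteq> D"

definition dissipative_in :: "'a::chilbert set \<Rightarrow> 'a set \<Rightarrow> ('a \<Rightarrow> 'a) \<Rightarrow> bool" where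
  "dissipative_in M D T \<longleftrightarrow> csubspace D \<and> D \<subseteq> M \<and> M \<subseteq> closure D \<and> (\<forall>x\<in>D. T x \<in> M) \<and>
     clinear_on D T \<and> (\<forall>x\<in>D. 0 \<le> Im (cinner x (T x)))"

definition max_dissipative_in :: "'a::chilbert set \<Rightarrow> 'a set \<Rightarrow> ('a \<Rightarrow> 'a) \<Rightarrow> bool" where
  "max_dissipative_in M D T \<longleftrightarrow> dissipative_in M D T \<and>
     (\<forall>D' T'. dissipative_in M D' T' \<and> D \<subseteq> D' \<and> (\<forall>x\<in>D. T' x = T x) \<longrightarrow> D' = D)"

definition in_resolvent_in :: "'a::chilbert set \<Rightarrow> 'a set \<Rightarrow> ('a \<Rightarrow> 'a) \<Rightarrow> complex \<Rightarrow> bool" where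
  "in_resolvent_in M D T \<xi> \<longleftrightarrow> bij_betw (\<lambda>x. T x - \<xi> *\<^sub>C x) D M \<and>
     (\<exists>c. \<forall>y\<in>M. norm (inv_into D (\<lambda>x. T x - \<xi> *\<^sub>C x) y) \<le> c * norm y)"

end

theory Submission
  imports Defs
begin


lemma scaleC_zero_left[simp]: "(0::complex) *\<^sub>C (x::'a::chilbert) = 0"
  using scaleC_of_real[of 0 x] by simp
lemma scaleC_zero_right[simp]: "a *\<^sub>C (0::'a::chilbert) = 0"
  using scaleC_add_right[of a "0::'a" 0] by simp
lemma scaleC_minus_right: "a *\<^sub>C (- x) = - (a *\<^sub>C (x::'a::chilbert))"
  using scaleC_add_right[of a "-x" x] by (simp add: eq_neg_iff_add_eq_0 add.commute)
lemma scaleC_diff_right: "a *\<^sub>C (x - y) = a *\<^sub>C x - a *\<^sub>C (y::'a::chilbert)"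
  using scaleC_add_right[of a x "-y"] by (simp add: scaleC_minus_right)
lemma scaleC_minus_left: "(- a) *\<^sub>C x = - (a *\<^sub>C (x::'a::chilbert))"
  using scaleC_add_left[of a "-a" x] by (simp add: eq_neg_iff_add_eq_0 add.commute)
lemma scaleC_diff_left: "(a - b) *\<^sub>C x = a *\<^sub>C x - b *\<^sub>C (x::'a::chilbert)"
  using scaleC_add_left[of a "-b" x] by (simp add: scaleC_minus_left)
lemma scaleC_one'[simp]: "1 *\<^sub>C (x::'a::chilbert) = x" by (rule scaleC_one)
lemma scaleC_real[simp]: "complex_of_real r *\<^sub>C (x::'a::chilbert) = r *\<^sub>R x"
  by (rule scaleC_of_real)
lemma scaleR_scaleC: "r *\<^sub>R (a *\<^sub>C (x::'a::chilbert)) = (complex_of_real r * a) *\<^sub>C x"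
  by (metis scaleC_of_real scaleC_scaleC)
lemma scaleC_scaleR: "a *\<^sub>C (r *\<^sub>R (x::'a::chilbert)) = (a * complex_of_real r) *\<^sub>C x"
  by (metis scaleC_of_real scaleC_scaleC)
lemma scaleC_sum_right: "a *\<^sub>C (\<Sum>i\<in>I. f i) = (\<Sum>i\<in>I. a *\<^sub>C (f i::'a::chilbert))"
  by (induction I rule: infinite_finite_induct) (auto simp: scaleC_add_right)

lemma cinner_zero_right[simp]: "cinner x (0::'a::chilbert) = 0"
  using cinner_add_right[of x "0::'a" 0] by simp
lemma cinner_zero_left[simp]: "cinner (0::'a::chilbert) x = 0"
  using cinner_commute[of 0 x] by simp
lemma cinner_add_left: "cinner (x + y) (z::'a::chilbert) = cinner x z + cinner y z"
  by (metis cinner_add_right cinner_commute complex_cnj_add)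
lemma cinner_scaleC_left: "cinner (a *\<^sub>C x) (y::'a::chilbert) = cnj a * cinner x y"
  by (metis cinner_scaleC_right cinner_commute complex_cnj_mult)
lemma cinner_minus_right: "cinner x (- y) = - cinner x (y::'a::chilbert)"
  using cinner_add_right[of x y "-y"] by (simp add: eq_neg_iff_add_eq_0 add.commute)
lemma cinner_minus_left: "cinner (- x) y = - cinner x (y::'a::chilbert)"
  using cinner_add_left[of x "-x" y] by (simp add: eq_neg_iff_add_eq_0 add.commute)
lemma cinner_diff_right: "cinner x (y - z) = cinner x y - cinner x (z::'a::chilbert)"
  using cinner_add_right[of x y "-z"] by (simp add: cinner_minus_right)
lemma cinner_diff_left: "cinner (x - y) z = cinner x z - cinner y (z::'a::chilbert)"
  using cinner_add_left[of x "-y" z] by (simp add: cinner_minus_left)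
lemma cinner_scaleR_right: "cinner x (r *\<^sub>R y) = complex_of_real r * cinner x (y::'a::chilbert)"
  by (metis cinner_scaleC_right scaleC_of_real)
lemma cinner_scaleR_left: "cinner (r *\<^sub>R x) y = complex_of_real r * cinner x (y::'a::chilbert)"
  by (metis cinner_scaleC_left scaleC_of_real complex_cnj_complex_of_real)
lemma cinner_sum_right: "cinner x (\<Sum>i\<in>I. f i) = (\<Sum>i\<in>I. cinner x (f i::'a::chilbert))"
  by (induction I rule: infinite_finite_induct) (auto simp: cinner_add_right)

lemma cinner_self_Re: "Re (cinner x (x::'a::chilbert)) = (norm x)\<^sup>2"
  by (simp add: cinner_self_norm)
lemma cinner_self_Im: "Im (cinner x (x::'a::chilbert)) = 0"
  by (simp add: cinner_self_norm)
lemma cinner_self_eq_0: "cinner x x = 0 \<longleftrightarrow> (x::'a::chilbert) = 0"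
  by (simp add: cinner_self_norm)

lemma norm_scaleC: "norm (a *\<^sub>C (x::'a::chilbert)) = cmod a * norm x"
proof -
  have "complex_of_real ((norm (a *\<^sub>C x))\<^sup>2) = cnj a * a * complex_of_real ((norm x)\<^sup>2)"
    by (metis cinner_self_norm cinner_scaleC_left cinner_scaleC_right mult.assoc)
  also have "cnj a * a = complex_of_real ((cmod a)\<^sup>2)"
    using complex_norm_square[of a] by (simp add: mult.commute)
  finally have "(norm (a *\<^sub>C x))\<^sup>2 = (cmod a * norm x)\<^sup>2"
    by (metis of_real_eq_iff of_real_mult power_mult_distrib)
  thus ?thesis by (simp add: power2_eq_iff_nonneg)
qed

lemma norm_add_sq: "(norm (x + y))\<^sup>2 = (norm x)\<^sup>2 + 2 * Re (cinner x y) + (norm (y::'a::chilbert))\<^sup>2"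
proof -
  have "cinner (x+y) (x+y) = cinner x x + cinner x y + cinner y x + cinner y y"
    by (simp add: cinner_add_left cinner_add_right)
  hence "Re (cinner (x+y) (x+y)) = Re (cinner x x) + 2 * Re (cinner x y) + Re (cinner y y)"
    using cinner_commute[of y x] by simp
  thus ?thesis by (simp add: cinner_self_Re)
qed

lemma norm_diff_sq: "(norm (x - y))\<^sup>2 = (norm x)\<^sup>2 - 2 * Re (cinner x y) + (norm (y::'a::chilbert))\<^sup>2"
  using norm_add_sq[of x "-y"] by (simp add: cinner_minus_right)



lemma clinear_UNIV:
  assumes "clinear_on UNIV f"
  shows "f (x + y) = f x + f (y::'a::chilbert)" "f (a *\<^sub>C x) = a *\<^sub>C f x"
  using assms unfolding clinear_on_def by auto

lemma clinear_UNIV2: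
  assumes "clinear_on UNIV (f::'a::chilbert\<Rightarrow>'a)"
  shows "f 0 = 0" "f (- x) = - f x" "f (x - y) = f x - f y" "f (r *\<^sub>R x) = r *\<^sub>R f x"
proof -
  show "f 0 = 0" using clinear_UNIV(2)[OF assms, of 0 0] by simp
  show m: "f (- x) = - f x" using clinear_UNIV(2)[OF assms, of "-1" x]
    by (metis scaleC_minus_left scaleC_one)
  show "f (x - y) = f x - f y" using clinear_UNIV(1)[OF assms, of x "-y"]
    by (metis diff_conv_add_uminus clinear_UNIV(2)[OF assms] scaleC_minus_left scaleC_one)
  show "f (r *\<^sub>R x) = r *\<^sub>R f x" using clinear_UNIV(2)[OF assms, of "complex_of_real r" x] by simp
qed

lemma clinear_sum:
  assumes "clinear_on UNIV (f::'a::chilbert\<Rightarrow>'a)"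
  shows "f (\<Sum>i\<in>I. g i) = (\<Sum>i\<in>I. f (g i))"
  by (induction I rule: infinite_finite_induct) (auto simp: clinear_UNIV[OF assms] clinear_UNIV2[OF assms])

lemma herm_sym:
  assumes lin: "clinear_on UNIV (S::'a::chilbert\<Rightarrow>'a)" and h: "\<forall>x. cinner x (S x) \<in> \<real>"
  shows "cinner (S x) y = cinner x (S y)"
proof -
  define a where "a = cinner x (S y)"
  define b where "b = cinner y (S x)"
  have e1: "cinner (x+y) (S (x+y)) = cinner x (S x) + a + b + cinner y (S y)"
    by (simp add: clinear_UNIV[OF lin] cinner_add_left cinner_add_right a_def b_def)
  have e2: "cinner (x + \<i> *\<^sub>C y) (S (x + \<i> *\<^sub>C y)) = cinner x (S x) + \<i> * a - \<i> * b + \<i> * (- \<i>) * cinner y (S y)"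
    by (simp add: clinear_UNIV[OF lin] cinner_add_left cinner_add_right a_def b_def cinner_scaleC_left cinner_scaleC_right algebra_simps)
  have r1: "Im (cinner x (S x)) = 0" "Im (cinner y (S y)) = 0" using h by (auto simp: complex_is_Real_iff)
  have "Im (cinner (x+y) (S (x+y))) = 0" "Im (cinner (x + \<i> *\<^sub>C y) (S (x + \<i> *\<^sub>C y))) = 0"
    using h by (auto simp: complex_is_Real_iff)
  hence "Im a + Im b = 0" "Re a - Re b = 0" using e1 e2 r1 by auto
  hence "a = cnj b" by (simp add: complex_eq_iff)
  thus ?thesis unfolding a_def b_def by (metis cinner_commute)
qed

lemma cs_form:
  assumes lin: "clinear_on UNIV (S::'a::chilbert\<Rightarrow>'a)" and nn: "nonneg_op S"
  shows "(cmod (cinner x (S y)))\<^sup>2 \<le> Re (cinner x (S x)) * Re (cinner y (S y))"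
    and "Re (cinner y (S y)) = 0 \<Longrightarrow> cinner x (S y) = 0"
proof -
  have h: "\<forall>x. cinner x (S x) \<in> \<real>" using nn unfolding nonneg_op_def by auto
  define a where "a = cinner x (S y)"
  define qx where "qx = Re (cinner x (S x))"
  define qy where "qy = Re (cinner y (S y))"
  have key: "0 \<le> qx - 2 * t * (cmod a)\<^sup>2 + t\<^sup>2 * (cmod a)\<^sup>2 * qy" for t :: real
  proof -
    define l where "l = - complex_of_real t * cnj a"
    have sy: "cinner y (S x) = cnj a"
      by (metis a_def cinner_commute herm_sym[OF lin h])
    have "cinner (x + l *\<^sub>C y) (S (x + l *\<^sub>C y)) = cinner x (S x) + l * a + cnj l * cnj a + cnj l * l * cinner y (S y)"
      by (simp add: clinear_UNIV[OF lin] cinner_add_left cinner_add_right a_def[symmetric] sy cinner_scaleC_left cinner_scaleC_right algebra_simps)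
    moreover have "0 \<le> Re (cinner (x + l *\<^sub>C y) (S (x + l *\<^sub>C y)))" using nn unfolding nonneg_op_def by auto
    moreover have na: "a * cnj a = complex_of_real ((cmod a)\<^sup>2)" using complex_norm_square[of a] by simp
    moreover have "l * a = - complex_of_real (t * (cmod a)\<^sup>2)"
      unfolding l_def using na by (simp add: mult.commute mult.left_commute)
    moreover have "cnj l * cnj a = - complex_of_real (t * (cmod a)\<^sup>2)"
      unfolding l_def using na by (simp add: mult.commute mult.left_commute)
    moreover have "cnj l * l = complex_of_real (t\<^sup>2 * (cmod a)\<^sup>2)"
      unfolding l_def using na by (simp add: power2_eq_square mult.commute mult.left_commute)
    moreover have "Im (cinner y (S y)) = 0" using h by (simp add: complex_is_Real_iff)
    ultimately have "0 \<le> Re (cinner x (S x) - complex_of_real (t * (cmod a)\<^sup>2) - complex_of_real (t * (cmod a)\<^sup>2) + complex_of_real (t\<^sup>2 * (cmod a)\<^sup>2) * cinner y (S y))"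
      by (metis diff_conv_add_uminus)
    moreover have "Re (complex_of_real r * cinner y (S y)) = r * qy" for r
      using \<open>Im (cinner y (S y)) = 0\<close> unfolding qy_def by simp
    ultimately show ?thesis unfolding qx_def qy_def by (simp add: algebra_simps)
  qed
  have qx0: "0 \<le> qx" using nn unfolding nonneg_op_def qx_def by auto
  have qy0: "0 \<le> qy" using nn unfolding nonneg_op_def qy_def by auto
  show z: "qy = 0 \<Longrightarrow> a = 0"
  proof (rule ccontr)
    assume "qy = 0" "a \<noteq> 0"
    hence p: "0 < (cmod a)\<^sup>2" by simp
    have "0 \<le> qx - 2 * ((qx + 1) / (2 * (cmod a)\<^sup>2)) * (cmod a)\<^sup>2"
      using key[of "(qx + 1) / (2 * (cmod a)\<^sup>2)"] \<open>qy = 0\<close> by simp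
    also have "\<dots> = -1" using p by (simp add: field_simps)
    finally show False by simp
  qed
  show "(cmod a)\<^sup>2 \<le> qx * qy"
  proof (cases "qy = 0")
    case True thus ?thesis using z by simp
  next
    case False
    hence p: "0 < qy" using qy0 by simp
    have "0 \<le> qx - 2 * (1/qy) * (cmod a)\<^sup>2 + (1/qy)\<^sup>2 * (cmod a)\<^sup>2 * qy" using key[of "1/qy"] .
    also have "\<dots> = qx - (cmod a)\<^sup>2 / qy" using p by (simp add: field_simps power2_eq_square)
    finally have "(cmod a)\<^sup>2 / qy \<le> qx" by simp
    thus ?thesis using p by (simp add: field_simps mult.commute)
  qed
qed

lemma nonneg_null:
  assumes lin: "clinear_on UNIV (S::'a::chilbert\<Rightarrow>'a)" and nn: "nonneg_op S"
    and "Re (cinner y (S y)) = 0"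
  shows "S y = 0"
  using cs_form(2)[OF lin nn assms(3), of "S y"] by (simp add: cinner_self_eq_0)

lemma id_clinear: "clinear_on UNIV (\<lambda>x::'a::chilbert. x)" by (simp add: clinear_on_def)
lemma id_nonneg: "nonneg_op (\<lambda>x::'a::chilbert. x)"
  by (simp add: nonneg_op_def cinner_self_norm)

lemma cauchy_schwarz: "cmod (cinner x y) \<le> norm x * norm (y::'a::chilbert)"
proof -
  have "(cmod (cinner x y))\<^sup>2 \<le> (norm x * norm y)\<^sup>2"
    using cs_form(1)[OF id_clinear id_nonneg, of x y] by (simp add: cinner_self_Re power_mult_distrib)
  thus ?thesis by (meson norm_ge_zero power2_le_imp_le zero_le_mult_iff)
qed

lemma bl_cinner_right: "bounded_linear (\<lambda>y. cinner x (y::'a::chilbert))"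
  apply (rule bounded_linear_intro[where K="norm x"])
  apply (simp add: cinner_add_right)
  apply (simp add: cinner_scaleR_right scaleR_conv_of_real)
  using cauchy_schwarz by (metis mult.commute cinner_commute complex_mod_cnj)

lemma bl_cinner_left: "bounded_linear (\<lambda>y. cinner (y::'a::chilbert) x)"
  apply (rule bounded_linear_intro[where K="norm x"])
  apply (simp add: cinner_add_left)
  apply (simp add: cinner_scaleR_left scaleR_conv_of_real)
  using cauchy_schwarz by (metis mult.commute cinner_commute complex_mod_cnj)

lemma bl_scaleC: "bounded_linear (\<lambda>y. a *\<^sub>C (y::'a::chilbert))"
  apply (rule bounded_linear_intro[where K="cmod a"])
  apply (simp add: scaleC_add_right)
  apply (simp add: scaleC_scaleR scaleR_scaleC mult.commute)
  by (simp add: norm_scaleC)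

lemma cbounded_bl: assumes "cbounded f" shows "bounded_linear (f::'a::chilbert\<Rightarrow>'a)"
proof -
  obtain K where K: "\<forall>x. norm (f x) \<le> K * norm x" and l: "clinear_on UNIV f"
    using assms unfolding cbounded_def by auto
  show ?thesis
    apply (rule bounded_linear_intro[where K=K])
    using clinear_UNIV[OF l] clinear_UNIV2[OF l] K by (auto simp: mult.commute)
qed

lemma cbounded_lin: "cbounded f \<Longrightarrow> clinear_on UNIV f" by (simp add: cbounded_def)

lemma cbounded_bound: assumes "cbounded (f::'a::chilbert\<Rightarrow>'a)"
  obtains K where "K > 0" "\<And>x. norm (f x) \<le> K * norm x"
proof -
  obtain K where K: "\<forall>x. norm (f x) \<le> K * norm x" using assms unfolding cbounded_def by auto
  have "norm (f x) \<le> (\<bar>K\<bar> + 1) * norm x" for x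
    using K[rule_format, of x] by (smt (verit) mult_right_mono norm_ge_zero)
  thus ?thesis using that[of "\<bar>K\<bar> + 1"] by auto
qed

lemma cinner_dense_zero:
  assumes "closure D = UNIV" "\<forall>x\<in>D. cinner z x = 0"
  shows "(z::'a::chilbert) = 0"
proof -
  have "closed {x. cinner z x = 0}"
    using bounded_linear.continuous_on[OF bl_cinner_right, of UNIV "\<lambda>x. x" z]
    by (intro closed_Collect_eq) (auto intro: continuous_on_const continuous_on_id)
  hence "closure D \<subseteq> {x. cinner z x = 0}" using assms(2) by (intro closure_minimal) auto
  hence "cinner z z = 0" using assms(1) by auto
  thus ?thesis by (simp add: cinner_self_eq_0)
qed



fun cc :: "nat \<Rightarrow> real" where
  "cc 0 = 0"
| "cc (Suc 0) = 1/2"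
| "cc (Suc (Suc n)) = (\<Sum>j\<in>{1..Suc n}. cc j * cc (Suc (Suc n) - j)) / 2"

lemma cc_nonneg: "0 \<le> cc n"
proof (induction n rule: less_induct)
  case (less n)
  show ?case
  proof (cases n rule: cc.cases)
    case (3 m)
    have "0 \<le> (\<Sum>j\<in>{1..Suc m}. cc j * cc (Suc (Suc m) - j))"
      using less 3 by (intro sum_nonneg mult_nonneg_nonneg) auto
    thus ?thesis using 3 by simp
  qed auto
qed

lemma cc_conv: "(\<Sum>i\<le>n. cc i * cc (n - i)) = 2 * cc n - (if n = 1 then 1 else 0)"
proof (cases n rule: cc.cases)
  case (3 m)
  have "{..Suc (Suc m)} = insert 0 (insert (Suc (Suc m)) {1..Suc m})" by auto
  hence "(\<Sum>i\<le>Suc (Suc m). cc i * cc (Suc (Suc m) - i)) = (\<Sum>j\<in>{1..Suc m}. cc j * cc (Suc (Suc m) - j))"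
    by simp
  thus ?thesis using 3 by simp
qed auto

definition ss :: "nat \<Rightarrow> real" where "ss N = (\<Sum>k<N. cc k)"

lemma tri_sum: "(\<Sum>(i,j)\<in>{(i,j). i+j < N}. cc i * cc j) = 2 * ss N - (if 2 \<le> N then 1 else 0)"
proof -
  have "(\<Sum>(i,j)\<in>{(i,j). i+j < N}. cc i * cc j) = (\<Sum>n<N. \<Sum>i\<le>n. cc i * cc (n - i))"
    by (rule sum.triangle_reindex)
  also have "\<dots> = (\<Sum>n<N. 2 * cc n - (if n = 1 then 1 else 0))" by (simp add: cc_conv)
  also have "\<dots> = 2 * ss N - (\<Sum>n<N. (if n = 1 then 1 else 0))"
    by (simp add: ss_def sum_subtractf sum_distrib_left)
  also have "(\<Sum>n<N. (if n = 1 then 1 else (0::real))) = (if 2 \<le> N then 1 else 0)"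
    by (simp add: sum.delta)
  finally show ?thesis .
qed

lemma sq_sum: "(\<Sum>(i,j)\<in>{..<N}\<times>{..<N}. cc i * cc j) = (ss N)\<^sup>2"
  by (simp add: ss_def power2_eq_square sum_product sum.cartesian_product)

lemma ss_le1: "ss N \<le> 1"
proof (induction N)
  case 0 thus ?case by (simp add: ss_def)
next
  case (Suc N)
  let ?T = "{(i,j). i+j < Suc N}" and ?Q = "{..<N}\<times>{..<N}"
  let ?f = "\<lambda>(i,j). cc i * cc j"
  have fin: "finite ?T"
    by (rule finite_subset[of _ "{..<Suc N}\<times>{..<Suc N}"]) auto
  have "sum ?f ?T = sum ?f (?T \<inter> ?Q) + sum ?f (?T - ?Q)"
    using fin by (metis sum.Int_Diff)
  also have "sum ?f (?T - ?Q) = 0"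
    by (rule sum.neutral) (auto; case_tac a; case_tac b; auto)
  also have "sum ?f (?T \<inter> ?Q) \<le> sum ?f ?Q"
    by (rule sum_mono2) (auto simp: cc_nonneg)
  finally have "2 * ss (Suc N) - (if 2 \<le> Suc N then 1 else 0) \<le> (ss N)\<^sup>2"
    by (simp only: tri_sum sq_sum) simp
  moreover have "0 \<le> ss N" by (simp add: ss_def cc_nonneg sum_nonneg)
  moreover have "(ss N)\<^sup>2 \<le> 1" using Suc calculation(2) by (simp add: power_le_one)
  moreover have "N = 0 \<Longrightarrow> ss (Suc N) = 0" by (simp add: ss_def)
  ultimately show ?case by (auto split: if_splits)
qed

lemma cc_summable: "summable cc"
  by (rule summableI_nonneg_bounded[of _ 1]) (auto simp: cc_nonneg ss_le1[unfolded ss_def])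

lemma cc_suminf: "(\<Sum>k. cc k) = 1"
proof -
  define L where "L = (\<Sum>k. cc k)"
  have sn: "summable (\<lambda>k. norm (cc k))" using cc_summable cc_nonneg by simp
  have "L * L = (\<Sum>k. \<Sum>i\<le>k. cc i * cc (k - i))"
    unfolding L_def by (rule Cauchy_product[OF sn sn])
  also have "\<dots> = (\<Sum>k. 2 * cc k - (if k = 1 then 1 else 0))" by (simp add: cc_conv)
  also have "\<dots> = 2 * L - 1"
  proof -
    have s1: "summable (\<lambda>k. 2 * cc k)" using cc_summable by (rule summable_mult)
    have s2: "(\<lambda>k. if k = 1 then 1 else (0::real)) sums 1"
      using sums_single[of 1 "\<lambda>_. 1::real"] by simp
    have "(\<lambda>k. 2 * cc k - (if k = 1 then 1 else 0)) sums (2 * L - 1)"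
      using sums_diff[OF summable_sums[OF s1] s2] suminf_mult[OF cc_summable, of 2] L_def by simp
    thus ?thesis by (simp add: sums_iff)
  qed
  finally have "(L - 1)\<^sup>2 = 0" by (simp add: power2_eq_square algebra_simps)
  thus ?thesis unfolding L_def by simp
qed

lemma ss_tendsto: "ss \<longlonglongrightarrow> 1"
  using summable_LIMSEQ[OF cc_summable] cc_suminf unfolding ss_def by simp



locale contr =
  fixes T :: "'a::chilbert \<Rightarrow> 'a"
  assumes T_bdd: "cbounded T"
    and T_herm: "\<forall>x. cinner x (T x) \<in> \<real>"
    and T_contr: "\<And>x. norm (T x) \<le> norm x"
begin

definition Tp :: "nat \<Rightarrow> 'a \<Rightarrow> 'a" where "Tp k = T ^^ k"

lemma T_lin: "clinear_on UNIV T" using T_bdd by (rule cbounded_lin)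

lemma Tp_lin: "clinear_on UNIV (Tp k)"
  by (induction k) (auto simp: Tp_def clinear_on_def clinear_UNIV[OF T_lin])

lemma Tp_norm: "norm (Tp k x) \<le> norm x"
proof (induction k)
  case (Suc k) thus ?case using T_contr[of "Tp k x"] by (simp add: Tp_def)
qed (simp add: Tp_def)

lemma Tp_add: "Tp (j + k) x = Tp j (Tp k x)"
  by (simp add: Tp_def funpow_add)

lemma Tp_0[simp]: "Tp 0 x = x" and Tp_1[simp]: "Tp 1 x = T x" by (simp_all add: Tp_def)

lemma T_sym: "cinner (T x) y = cinner x (T y)"
  by (rule herm_sym[OF T_lin T_herm])

lemma Tp_sym: "cinner (Tp k x) y = cinner x (Tp k y)"
proof (induction k arbitrary: x y)
  case (Suc k)
  have "cinner (Tp (Suc k) x) y = cinner (T (Tp k x)) y" by (simp add: Tp_def)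
  also have "\<dots> = cinner (Tp k x) (T y)" by (rule T_sym)
  also have "\<dots> = cinner x (Tp k (T y))" by (rule Suc)
  also have "Tp k (T y) = Tp (Suc k) y" by (simp add: Tp_def funpow_swap1)
  finally show ?case .
qed simp

lemma Tp_comm: assumes "\<And>x. F (T x) = T (F x)" shows "F (Tp k x) = Tp k (F x)"
  by (induction k) (simp_all add: Tp_def assms)

lemma Tp_inner_real: "cinner x (Tp k x) \<in> \<real>"
proof -
  have "cinner x (Tp k x) = cnj (cinner x (Tp k x))"
    by (metis Tp_sym cinner_commute)
  thus ?thesis by (metis Reals_cnj_iff)
qed

definition P :: "'a \<Rightarrow> 'a" where "P x = (\<Sum>k. cc k *\<^sub>R Tp k x)"

lemma P_nsummable: "summable (\<lambda>k. norm (cc k *\<^sub>R Tp k x))"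
  apply (rule summable_comparison_test'[of "\<lambda>k. cc k * norm x" 0])
  using summable_mult2[OF cc_summable] apply simp
  using Tp_norm cc_nonneg by (simp add: mult_left_mono)

lemma P_summable: "summable (\<lambda>k. cc k *\<^sub>R Tp k x)"
  using P_nsummable by (rule summable_norm_cancel)

lemma P_norm: "norm (P x) \<le> norm x"
proof -
  have "norm (P x) \<le> (\<Sum>k. norm (cc k *\<^sub>R Tp k x))" unfolding P_def by (rule summable_norm[OF P_nsummable])
  also have "\<dots> \<le> (\<Sum>k. cc k * norm x)"
    apply (rule suminf_le)
    using Tp_norm cc_nonneg apply (simp add: mult_left_mono)
    using P_nsummable summable_mult2[OF cc_summable] by auto
  also have "\<dots> = norm x" using suminf_mult2[OF cc_summable, of "norm x"] cc_suminf by simp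
  finally show ?thesis .
qed

lemma P_add: "P (x + y) = P x + P y"
  unfolding P_def by (simp add: clinear_UNIV[OF Tp_lin] scaleR_add_right suminf_add[OF P_summable P_summable])

lemma P_scaleC: "P (a *\<^sub>C x) = a *\<^sub>C P x"
proof -
  have "P (a *\<^sub>C x) = (\<Sum>k. a *\<^sub>C (cc k *\<^sub>R Tp k x))"
    unfolding P_def by (simp add: clinear_UNIV[OF Tp_lin] scaleC_scaleR scaleR_scaleC mult.commute)
  also have "\<dots> = a *\<^sub>C P x" unfolding P_def
    by (rule bounded_linear.suminf[OF bl_scaleC P_summable, symmetric])
  finally show ?thesis .
qed

lemma P_lin: "clinear_on UNIV P" by (simp add: clinear_on_def P_add P_scaleC)

lemma P_comm:
  assumes F: "cbounded F" and c: "\<And>x. F (T x) = T (F x)"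
  shows "F (P x) = P (F x)"
proof -
  have "F (P x) = (\<Sum>k. F (cc k *\<^sub>R Tp k x))"
    unfolding P_def by (rule bounded_linear.suminf[OF cbounded_bl[OF F] P_summable])
  also have "\<dots> = P (F x)" unfolding P_def
    by (simp add: clinear_UNIV2[OF cbounded_lin[OF F]] Tp_comm[of F, OF c])
  finally show ?thesis .
qed

lemma P_inner: "cinner x (P x) = (\<Sum>k. complex_of_real (cc k) * cinner x (Tp k x))"
  unfolding P_def
  by (simp add: bounded_linear.suminf[OF bl_cinner_right P_summable] cinner_scaleR_right)

lemma P_inner_summable: "summable (\<lambda>k. complex_of_real (cc k) * cinner x (Tp k x))"
  using bounded_linear.summable[OF bl_cinner_right P_summable, of x]
  by (simp add: cinner_scaleR_right)

lemma P_inner_real: "cinner x (P x) \<in> \<real>"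
proof -
  have "Im (cinner x (P x)) = (\<Sum>k. Im (complex_of_real (cc k) * cinner x (Tp k x)))"
    unfolding P_inner by (rule bounded_linear.suminf[OF bounded_linear_Im P_inner_summable])
  also have "\<dots> = 0" using Tp_inner_real by (simp add: complex_is_Real_iff)
  finally show ?thesis by (simp add: complex_is_Real_iff)
qed

lemma P_inner_le: "Re (cinner x (P x)) \<le> (norm x)\<^sup>2"
proof -
  have "Re (cinner x (P x)) = (\<Sum>k. Re (complex_of_real (cc k) * cinner x (Tp k x)))"
    unfolding P_inner by (rule bounded_linear.suminf[OF bounded_linear_Re P_inner_summable])
  also have "\<dots> \<le> (\<Sum>k. cc k * (norm x)\<^sup>2)"
  proof (rule suminf_le)
    fix k
    have "Re (cinner x (Tp k x)) \<le> cmod (cinner x (Tp k x))" by (rule complex_Re_le_cmod)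
    also have "\<dots> \<le> norm x * norm (Tp k x)" by (rule cauchy_schwarz)
    also have "\<dots> \<le> norm x * norm x" using Tp_norm by (simp add: mult_left_mono)
    finally show "Re (complex_of_real (cc k) * cinner x (Tp k x)) \<le> cc k * (norm x)\<^sup>2"
      using cc_nonneg[of k] by (simp add: power2_eq_square mult_left_mono)
    show "summable (\<lambda>k. Re (complex_of_real (cc k) * cinner x (Tp k x)))"
      by (rule bounded_linear.summable[OF bounded_linear_Re P_inner_summable])
    show "summable (\<lambda>k. cc k * (norm x)\<^sup>2)" by (rule summable_mult2[OF cc_summable])
  qed
  also have "\<dots> = (norm x)\<^sup>2" using suminf_mult2[OF cc_summable, of "(norm x)\<^sup>2"] cc_suminf by simp
  finally show ?thesis .
qed

end


context contr begin

definition PN :: "nat \<Rightarrow> 'a \<Rightarrow> 'a" where "PN N x = (\<Sum>k<N. cc k *\<^sub>R Tp k x)"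

lemma PN_tendsto: "(\<lambda>N. PN N y) \<longlonglongrightarrow> P y"
  unfolding PN_def P_def by (rule summable_LIMSEQ[OF P_summable])

lemma PN_norm: "norm (PN N y) \<le> norm y"
proof -
  have "norm (PN N y) \<le> (\<Sum>k<N. norm (cc k *\<^sub>R Tp k y))" unfolding PN_def by (rule norm_sum)
  also have "\<dots> \<le> (\<Sum>k<N. cc k * norm y)"
    by (rule sum_mono) (use Tp_norm cc_nonneg in \<open>simp add: mult_left_mono\<close>)
  also have "\<dots> = ss N * norm y" by (simp add: ss_def sum_distrib_right)
  also have "\<dots> \<le> norm y" using ss_le1[of N]
    by (intro mult_left_le_one_le) (auto simp: ss_def cc_nonneg sum_nonneg)
  finally show ?thesis .
qed

lemma PN_diff: "PN N (y - z) = PN N y - PN N z"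
  unfolding PN_def by (simp add: clinear_UNIV2[OF Tp_lin] scaleR_diff_right sum_subtractf)

definition g :: "'a \<Rightarrow> nat \<times> nat \<Rightarrow> 'a" where "g x = (\<lambda>(i,j). (cc i * cc j) *\<^sub>R Tp (i+j) x)"

lemma PN_PN: "PN N (PN N x) = sum (g x) ({..<N}\<times>{..<N})"
proof -
  have "PN N (PN N x) = (\<Sum>i<N. cc i *\<^sub>R Tp i (\<Sum>j<N. cc j *\<^sub>R Tp j x))" by (simp add: PN_def)
  also have "\<dots> = (\<Sum>i<N. \<Sum>j<N. (cc i * cc j) *\<^sub>R Tp (i+j) x)"
    by (simp add: clinear_sum[OF Tp_lin] clinear_UNIV2[OF Tp_lin] Tp_add scaleR_sum_right)
  also have "\<dots> = sum (g x) ({..<N}\<times>{..<N})"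
    by (simp add: g_def sum.cartesian_product)
  finally show ?thesis .
qed

lemma tri_g: "sum (g x) {(i,j). i+j < N} = 2 *\<^sub>R PN N x - (if 2 \<le> N then T x else 0)"
proof -
  have "sum (g x) {(i,j). i+j < N} = (\<Sum>n<N. \<Sum>i\<le>n. (cc i * cc (n - i)) *\<^sub>R Tp (i + (n - i)) x)"
    unfolding g_def by (rule sum.triangle_reindex)
  also have "\<dots> = (\<Sum>n<N. (\<Sum>i\<le>n. cc i * cc (n - i)) *\<^sub>R Tp n x)"
    by (simp add: scaleR_sum_left)
  also have "\<dots> = (\<Sum>n<N. (2 * cc n) *\<^sub>R Tp n x - (if n = 1 then T x else 0))"
    by (intro sum.cong) (auto simp: cc_conv algebra_simps Tp_def)
  also have "\<dots> = 2 *\<^sub>R PN N x - (\<Sum>n<N. (if n = 1 then T x else 0))"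
    by (simp add: PN_def sum_subtractf scaleR_sum_right)
  also have "(\<Sum>n<N. (if n = 1 then T x else 0)) = (if 2 \<le> N then T x else 0)"
    by (simp add: sum.delta)
  finally show ?thesis .
qed

lemma rest_bound:
  assumes "2 \<le> N"
  shows "norm (PN N (PN N x) - (2 *\<^sub>R PN N x - T x)) \<le> (ss N - 1)\<^sup>2 * norm x"
proof -
  let ?Q = "{..<N}\<times>{..<N}" and ?T = "{(i,j). i+j < N}"
  have sub: "?T \<subseteq> ?Q" by auto
  have fin: "finite ?Q" by simp
  have "PN N (PN N x) - (2 *\<^sub>R PN N x - T x) = sum (g x) (?Q - ?T)"
    using PN_PN tri_g[of x N] assms sum.subset_diff[OF sub fin, of "g x"] by simp
  hence "norm (PN N (PN N x) - (2 *\<^sub>R PN N x - T x)) \<le> (\<Sum>p\<in>?Q - ?T. norm (g x p))"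
    by (simp add: norm_sum)
  also have "\<dots> \<le> (\<Sum>p\<in>?Q - ?T. (case p of (i,j) \<Rightarrow> cc i * cc j) * norm x)"
    by (rule sum_mono) (auto simp: g_def cc_nonneg Tp_norm mult_left_mono)
  also have "\<dots> = ((\<Sum>p\<in>?Q. (case p of (i,j) \<Rightarrow> cc i * cc j)) - (\<Sum>p\<in>?T. (case p of (i,j) \<Rightarrow> cc i * cc j))) * norm x"
    using sum.subset_diff[OF sub fin, of "\<lambda>p. case p of (i,j) \<Rightarrow> cc i * cc j"]
    by (simp add: sum_distrib_right)
  also have "\<dots> = (ss N - 1)\<^sup>2 * norm x"
  proof -
    have e: "(\<Sum>p\<in>?T. (case p of (i,j) \<Rightarrow> cc i * cc j)) = 2 * ss N - 1"
      using tri_sum[of N] assms by simp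
    have q: "(\<Sum>p\<in>?Q. (case p of (i,j) \<Rightarrow> cc i * cc j)) = (ss N)\<^sup>2"
      using sq_sum[of N] by simp
    show ?thesis unfolding e q by (simp add: power2_eq_square algebra_simps)
  qed
  finally show ?thesis .
qed

lemma P_sq: "P (P x) = 2 *\<^sub>R P x - T x"
proof -
  have t1: "(\<lambda>N. PN N (PN N x) - (2 *\<^sub>R PN N x - T x)) \<longlonglongrightarrow> 0"
  proof (rule Lim_null_comparison)
    show "\<forall>\<^sub>F N in sequentially. norm (PN N (PN N x) - (2 *\<^sub>R PN N x - T x)) \<le> (ss N - 1)\<^sup>2 * norm x"
      using eventually_ge_at_top[of 2] by eventually_elim (rule rest_bound)
    have "(\<lambda>N. (ss N - 1)\<^sup>2 * norm x) \<longlonglongrightarrow> (1 - 1)\<^sup>2 * norm x"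
      by (intro tendsto_intros ss_tendsto)
    thus "(\<lambda>N. (ss N - 1)\<^sup>2 * norm x) \<longlonglongrightarrow> 0" by simp
  qed
  have t2: "(\<lambda>N. 2 *\<^sub>R PN N x - T x) \<longlonglongrightarrow> 2 *\<^sub>R P x - T x"
    by (intro tendsto_intros PN_tendsto)
  have t3: "(\<lambda>N. PN N (PN N x)) \<longlonglongrightarrow> 2 *\<^sub>R P x - T x"
    using tendsto_add[OF t1 t2] by simp
  have t4: "(\<lambda>N. PN N (PN N x)) \<longlonglongrightarrow> P (P x)"
  proof -
    have a: "(\<lambda>N. PN N (PN N x) - P (P x)) \<longlonglongrightarrow> 0"
    proof (rule Lim_null_comparison)
      show "\<forall>\<^sub>F N in sequentially. norm (PN N (PN N x) - P (P x)) \<le> norm (PN N x - P x) + norm (PN N (P x) - P (P x))"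
      proof (intro always_eventually allI)
        fix N
        have "PN N (PN N x) - P (P x) = PN N (PN N x - P x) + (PN N (P x) - P (P x))"
          by (simp add: PN_diff)
        hence "norm (PN N (PN N x) - P (P x)) \<le> norm (PN N (PN N x - P x)) + norm (PN N (P x) - P (P x))"
          by (metis norm_triangle_ineq)
        thus "norm (PN N (PN N x) - P (P x)) \<le> norm (PN N x - P x) + norm (PN N (P x) - P (P x))"
          using PN_norm[of N "PN N x - P x"] by simp
      qed
      have "(\<lambda>N. norm (PN N x - P x) + norm (PN N (P x) - P (P x))) \<longlonglongrightarrow> norm (P x - P x) + norm (P (P x) - P (P x))"
        by (intro tendsto_intros PN_tendsto)
      thus "(\<lambda>N. norm (PN N x - P x) + norm (PN N (P x) - P (P x))) \<longlonglongrightarrow> 0" by simp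
    qed
    show ?thesis using tendsto_add[OF a tendsto_const[of "P (P x)"]] by simp
  qed
  show ?thesis using LIMSEQ_unique[OF t4 t3] .
qed

end


context contr begin

definition S0 :: "'a \<Rightarrow> 'a" where "S0 x = x - P x"

lemma S0_lin: "clinear_on UNIV S0"
  by (simp add: clinear_on_def S0_def P_add P_scaleC scaleC_diff_right)

lemma S0_bdd: "cbounded S0"
  unfolding cbounded_def
proof (intro conjI S0_lin exI allI)
  fix x
  have "norm (S0 x) \<le> norm x + norm (P x)" unfolding S0_def by (rule norm_triangle_ineq4)
  thus "norm (S0 x) \<le> 2 * norm x" using P_norm[of x] by simp
qed

lemma S0_norm: "norm (S0 x) \<le> 2 * norm x"
proof -
  have "norm (S0 x) \<le> norm x + norm (P x)" unfolding S0_def by (rule norm_triangle_ineq4)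
  thus "norm (S0 x) \<le> 2 * norm x" using P_norm[of x] by simp
qed

lemma S0_nonneg: "nonneg_op S0"
  unfolding nonneg_op_def
proof
  fix x
  have e: "cinner x (S0 x) = cinner x x - cinner x (P x)" by (simp add: S0_def cinner_diff_right)
  show "cinner x (S0 x) \<in> \<real> \<and> 0 \<le> Re (cinner x (S0 x))"
    unfolding e using P_inner_real[of x] P_inner_le[of x]
    by (auto simp: cinner_self_norm complex_is_Real_iff)
qed

lemma S0_sq: "S0 (S0 x) = x - T x"
proof -
  have "S0 (S0 x) = x - P x - (P x - P (P x))"
    by (simp add: S0_def clinear_UNIV2[OF P_lin])
  also have "\<dots> = x - T x" by (simp add: P_sq scaleR_2 algebra_simps)
  finally show ?thesis .
qed

lemma S0_comm: assumes F: "cbounded F" and c: "\<And>x. F (T x) = T (F x)"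
  shows "F (S0 x) = S0 (F x)"
  by (simp add: S0_def clinear_UNIV2[OF cbounded_lin[OF F]] P_comm[of F, OF F c])

end

lemma nonneg_herm: "nonneg_op S \<Longrightarrow> \<forall>x. cinner x (S x) \<in> \<real>"
  by (simp add: nonneg_op_def)




lemma V_sq_bound:
  assumes V: "cbounded (V::'a::chilbert\<Rightarrow>'a)" "nonneg_op V" and K: "\<And>x. norm (V x) \<le> K * norm x" and K0: "K > 0"
  shows "(norm (V x))\<^sup>2 \<le> K * Re (cinner x (V x))"
proof -
  have lin: "clinear_on UNIV V" using V by (simp add: cbounded_lin)
  have "(cmod (cinner (V x) (V x)))\<^sup>2 \<le> Re (cinner (V x) (V (V x))) * Re (cinner x (V x))"
    by (rule cs_form(1)[OF lin V(2)])
  moreover have "(cmod (cinner (V x) (V x))) = (norm (V x))\<^sup>2" by (simp add: cinner_self_norm del: of_real_power)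
  moreover have "Re (cinner (V x) (V (V x))) \<le> K * (norm (V x))\<^sup>2"
  proof -
    have "Re (cinner (V x) (V (V x))) \<le> cmod (cinner (V x) (V (V x)))" by (rule complex_Re_le_cmod)
    also have "\<dots> \<le> norm (V x) * norm (V (V x))" by (rule cauchy_schwarz)
    also have "\<dots> \<le> norm (V x) * (K * norm (V x))" using K by (simp add: mult_left_mono)
    finally show ?thesis by (simp add: power2_eq_square algebra_simps)
  qed
  moreover have q0: "0 \<le> Re (cinner x (V x))" using V(2) by (simp add: nonneg_op_def)
  ultimately have "((norm (V x))\<^sup>2)\<^sup>2 \<le> (K * (norm (V x))\<^sup>2) * Re (cinner x (V x))"
    by (metis (no_types, lifting) mult_right_mono order_trans)
  hence "(norm (V x))\<^sup>2 * (norm (V x))\<^sup>2 \<le> (norm (V x))\<^sup>2 * (K * Re (cinner x (V x)))"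
    by (simp add: power2_eq_square[of "(norm (V x))\<^sup>2"] mult_ac)
  moreover have "0 \<le> K" using K0 by simp
  ultimately show ?thesis
  proof (cases "norm (V x) = 0")
    case True thus ?thesis using q0 \<open>0 \<le> K\<close> by simp
  next
    case False
    hence "0 < (norm (V x))\<^sup>2" by simp
    thus ?thesis using \<open>(norm (V x))\<^sup>2 * (norm (V x))\<^sup>2 \<le> _\<close> mult_le_cancel_left_pos by blast
  qed
qed




lemma scaleC_scaleR_comm: "a *\<^sub>C (r *\<^sub>R (z::'a::chilbert)) = r *\<^sub>R (a *\<^sub>C z)"
  by (simp add: scaleC_scaleR scaleR_scaleC mult.commute)

lemma sqrt_exists:
  assumes V: "cbounded (V::'a::chilbert\<Rightarrow>'a)" "nonneg_op V"
  shows "\<exists>R. cbounded R \<and> nonneg_op R \<and> (\<forall>x. R (R x) = V x) \<and>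
           (\<forall>F. cbounded F \<and> (\<forall>x. F (V x) = V (F x)) \<longrightarrow> (\<forall>x. F (R x) = R (F x)))"
proof -
  obtain K where K0: "K > 0" and K: "\<And>x. norm (V x) \<le> K * norm x" using cbounded_bound[OF V(1)] by blast
  have lin: "clinear_on UNIV V" using V by (simp add: cbounded_lin)
  define T where "T x = x - (1/K) *\<^sub>R V x" for x
  have Tlin: "clinear_on UNIV T"
    unfolding clinear_on_def T_def
  proof (intro conjI ballI allI)
    fix x y :: 'a and a
    show "x + y - (1/K) *\<^sub>R V (x + y) = x - (1/K) *\<^sub>R V x + (y - (1/K) *\<^sub>R V y)"
      by (simp add: clinear_UNIV[OF lin] scaleR_add_right)
    show "a *\<^sub>C x - (1/K) *\<^sub>R V (a *\<^sub>C x) = a *\<^sub>C (x - (1/K) *\<^sub>R V x)"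
      by (simp add: clinear_UNIV[OF lin] scaleC_diff_right scaleC_scaleR_comm)
  qed
  have Tbdd: "cbounded T" unfolding cbounded_def
  proof (intro conjI Tlin exI allI)
    fix x
    have "norm (T x) \<le> norm x + norm ((1/K) *\<^sub>R V x)" unfolding T_def by (rule norm_triangle_ineq4)
    also have "\<dots> \<le> norm x + (1/K) * (K * norm x)" using K[of x] K0 by (simp add: pos_divide_le_eq mult.commute)
    finally show "norm (T x) \<le> 2 * norm x" using K0 by simp
  qed
  have Therm: "\<forall>x. cinner x (T x) \<in> \<real>"
    using nonneg_herm[OF V(2)] by (auto simp: T_def cinner_diff_right cinner_scaleR_right cinner_self_norm)
  have Tc: "norm (T x) \<le> norm x" for x
  proof -
    define q where "q = Re (cinner x (V x))"
    define n where "n = norm (V x)"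
    have q0: "0 \<le> q" using V(2) by (simp add: nonneg_op_def q_def)
    have nq: "n\<^sup>2 \<le> K * q" unfolding n_def q_def by (rule V_sq_bound[OF V K K0])
    have a: "Re (cinner x ((1/K) *\<^sub>R V x)) = q / K"
      by (simp add: cinner_scaleR_right q_def)
    have b: "norm ((1/K) *\<^sub>R V x) = n / K" using K0 by (simp add: n_def)
    have "(norm (T x))\<^sup>2 = (norm x)\<^sup>2 - 2 * Re (cinner x ((1/K) *\<^sub>R V x)) + (norm ((1/K) *\<^sub>R V x))\<^sup>2"
      unfolding T_def by (rule norm_diff_sq)
    also have "\<dots> = (norm x)\<^sup>2 - 2 * (q / K) + (n / K)\<^sup>2" by (simp only: a b)
    also have "(n / K)\<^sup>2 = n\<^sup>2 / K\<^sup>2" by (simp add: power_divide)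
    also have "n\<^sup>2 / K\<^sup>2 \<le> (K * q) / K\<^sup>2" using nq K0 by (intro divide_right_mono) auto
    also have "(K * q) / K\<^sup>2 = q / K" using K0 by (simp add: power2_eq_square)
    finally have "(norm (T x))\<^sup>2 \<le> (norm x)\<^sup>2 - q / K" by simp
    also have "\<dots> \<le> (norm x)\<^sup>2" using K0 q0 by simp
    finally show ?thesis by (rule power2_le_imp_le) simp
  qed
  interpret c: contr T by (rule contr.intro[OF Tbdd Therm Tc])
  define R where "R x = sqrt K *\<^sub>R c.S0 x" for x
  have Rlin: "clinear_on UNIV R"
    unfolding clinear_on_def R_def
  proof (intro conjI ballI allI)
    fix x y :: 'a and a
    show "sqrt K *\<^sub>R c.S0 (x + y) = sqrt K *\<^sub>R c.S0 x + sqrt K *\<^sub>R c.S0 y"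
      by (simp add: clinear_UNIV[OF c.S0_lin] scaleR_add_right)
    show "sqrt K *\<^sub>R c.S0 (a *\<^sub>C x) = a *\<^sub>C (sqrt K *\<^sub>R c.S0 x)"
      by (simp add: clinear_UNIV[OF c.S0_lin] scaleC_scaleR_comm)
  qed
  have "cbounded R" unfolding cbounded_def
  proof (intro conjI Rlin exI allI)
    fix x
    have "norm (R x) = sqrt K * norm (c.S0 x)" using K0 by (simp add: R_def)
    also have "\<dots> \<le> sqrt K * (2 * norm x)"
      using c.S0_norm K0 by (simp add: mult_left_mono)
    finally show "norm (R x) \<le> (sqrt K * 2) * norm x" by simp
  qed
  moreover have "nonneg_op R" using c.S0_nonneg K0
    by (auto simp: nonneg_op_def R_def cinner_scaleR_right)
  moreover have "R (R x) = V x" for x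
  proof -
    have "R (R x) = (sqrt K * sqrt K) *\<^sub>R c.S0 (c.S0 x)"
      by (simp add: R_def clinear_UNIV2[OF c.S0_lin])
    also have "\<dots> = K *\<^sub>R (x - T x)" using K0 by (simp add: c.S0_sq)
    also have "\<dots> = V x" using K0 by (simp add: T_def)
    finally show ?thesis .
  qed
  moreover have "F (R x) = R (F x)" if F: "cbounded F" and cF: "\<forall>x. F (V x) = V (F x)" for F x
  proof -
    have "F (T y) = T (F y)" for y
      using cF by (simp add: T_def clinear_UNIV2[OF cbounded_lin[OF F]])
    hence "F (c.S0 y) = c.S0 (F y)" for y by (rule c.S0_comm[OF F])
    thus ?thesis by (simp add: R_def clinear_UNIV2[OF cbounded_lin[OF F]])
  qed
  ultimately show ?thesis by blast
qed




lemma sqrt_unique: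
  assumes S: "cbounded (S::'a::chilbert\<Rightarrow>'a)" "nonneg_op S" and S': "cbounded S'" "nonneg_op S'"
    and sq: "\<And>x. S (S x) = S' (S' x)" and cm: "\<And>x. S (S' x) = S' (S x)"
  shows "S = S'"
proof
  fix x
  have l: "clinear_on UNIV S" "clinear_on UNIV S'" using S S' by (auto simp: cbounded_lin)
  define D where "D y = S y - S' y" for y
  have symS: "cinner (S a) b = cinner a (S b)" for a b by (rule herm_sym[OF l(1) nonneg_herm[OF S(2)]])
  have symS': "cinner (S' a) b = cinner a (S' b)" for a b by (rule herm_sym[OF l(2) nonneg_herm[OF S'(2)]])
  define y where "y = D x"
  have "S y + S' y = 0"
    unfolding y_def D_def by (simp add: clinear_UNIV2[OF l(1)] clinear_UNIV2[OF l(2)] sq cm)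
  hence "cinner y (S y) + cinner y (S' y) = 0" by (metis cinner_add_right cinner_zero_right)
  hence "Re (cinner y (S y)) + Re (cinner y (S' y)) = 0" by (metis plus_complex.sel(1) zero_complex.sel(1))
  moreover have "0 \<le> Re (cinner y (S y))" "0 \<le> Re (cinner y (S' y))" using S(2) S'(2) by (auto simp: nonneg_op_def)
  ultimately have "Re (cinner y (S y)) = 0" "Re (cinner y (S' y)) = 0" by auto
  hence "S y = 0" "S' y = 0" using nonneg_null[OF l(1) S(2)] nonneg_null[OF l(2) S'(2)] by auto
  hence "D (D x) = 0" unfolding D_def y_def by simp
  hence "cinner x (D (D x)) = 0" by simp
  moreover have "cinner (D x) (D x) = cinner x (D (D x))"
    by (simp add: D_def cinner_diff_left cinner_diff_right symS symS' clinear_UNIV2[OF l(1)] clinear_UNIV2[OF l(2)])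
  ultimately have "D x = 0" by (simp add: cinner_self_eq_0)
  thus "S x = S' x" by (simp add: D_def)
qed

lemma op_sqrt_props:
  assumes V: "cbounded (V::'a::chilbert\<Rightarrow>'a)" "nonneg_op V"
  shows "cbounded (op_sqrt V) \<and> nonneg_op (op_sqrt V) \<and> (\<forall>x. op_sqrt V (op_sqrt V x) = V x)"
proof -
  obtain R where R: "cbounded R" "nonneg_op R" "\<forall>x. R (R x) = V x"
    and Rc: "\<forall>F. cbounded F \<and> (\<forall>x. F (V x) = V (F x)) \<longrightarrow> (\<forall>x. F (R x) = R (F x))"
    using sqrt_exists[OF V] by blast
  have "\<exists>!S. cbounded S \<and> nonneg_op S \<and> (\<forall>x. S (S x) = V x)"
  proof (rule ex1I[of _ R])
    show "cbounded R \<and> nonneg_op R \<and> (\<forall>x. R (R x) = V x)" using R by blast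
    fix S assume S: "cbounded S \<and> nonneg_op S \<and> (\<forall>x. S (S x) = V x)"
    have "\<forall>x. S (V x) = V (S x)" using S by metis
    hence c: "\<forall>x. S (R x) = R (S x)" using Rc S by blast
    show "S = R" by (rule sqrt_unique) (use S R c in auto)
  qed
  thus ?thesis unfolding op_sqrt_def by (rule theI')
qed



lemma csub_scaleR: "csubspace S \<Longrightarrow> x \<in> S \<Longrightarrow> r *\<^sub>R x \<in> S"
  unfolding csubspace_def by (metis scaleC_of_real)
lemma csub_add: "csubspace S \<Longrightarrow> x \<in> S \<Longrightarrow> y \<in> S \<Longrightarrow> x + y \<in> S"
  unfolding csubspace_def by blast
lemma csub_scaleC: "csubspace S \<Longrightarrow> x \<in> S \<Longrightarrow> a *\<^sub>C x \<in> S"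
  unfolding csubspace_def by blast
lemma csub_0: "csubspace S \<Longrightarrow> 0 \<in> S"
  unfolding csubspace_def by blast
lemma csub_diff: "csubspace S \<Longrightarrow> x \<in> S \<Longrightarrow> y \<in> S \<Longrightarrow> x - y \<in> S"
  using csub_add[of S x "(-1) *\<^sub>C y"] csub_scaleC[of S y "-1"]
  by (simp add: scaleC_minus_left)

lemma parallelogram: "(norm (u + v))\<^sup>2 + (norm (u - v))\<^sup>2 = 2 * (norm u)\<^sup>2 + 2 * (norm (v::'a::chilbert))\<^sup>2"
  by (simp add: norm_add_sq norm_diff_sq)

lemma orth_from_min:
  assumes min: "\<And>t. norm e \<le> norm (e - t *\<^sub>C s)"
  shows "cinner s (e::'a::chilbert) = 0"
proof (cases "s = 0")
  case True thus ?thesis by simp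
next
  case False
  define a where "a = cinner s e"
  define n where "n = (norm s)\<^sup>2"
  have n0: "n > 0" using False by (simp add: n_def)
  define t where "t = a / complex_of_real n"
  have "(norm (e - t *\<^sub>C s))\<^sup>2 = (norm e)\<^sup>2 - 2 * Re (cinner e (t *\<^sub>C s)) + (norm (t *\<^sub>C s))\<^sup>2"
    by (rule norm_diff_sq)
  also have "cinner e (t *\<^sub>C s) = complex_of_real ((cmod a)\<^sup>2 / n)"
  proof -
    have "cinner e (t *\<^sub>C s) = t * cnj a" by (simp add: cinner_scaleC_right a_def cinner_commute[of e s])
    also have "\<dots> = (a * cnj a) / complex_of_real n" by (simp add: t_def)
    also have "a * cnj a = complex_of_real ((cmod a)\<^sup>2)" using complex_norm_square[of a] by simp
    finally show ?thesis by simp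
  qed
  also have "(norm (t *\<^sub>C s))\<^sup>2 = (cmod a)\<^sup>2 / n"
  proof -
    have "cmod t = cmod a / n" using n0 by (simp add: t_def norm_divide)
    moreover have "(norm (t *\<^sub>C s))\<^sup>2 = (cmod t)\<^sup>2 * n" by (simp add: norm_scaleC power_mult_distrib n_def)
    ultimately have "(norm (t *\<^sub>C s))\<^sup>2 = (cmod a / n)\<^sup>2 * n" by simp
    also have "\<dots> = (cmod a)\<^sup>2 / n" using n0 by (simp add: power2_eq_square)
    finally show ?thesis .
  qed
  finally have "(norm (e - t *\<^sub>C s))\<^sup>2 = (norm e)\<^sup>2 - (cmod a)\<^sup>2 / n" by simp
  moreover have "(norm e)\<^sup>2 \<le> (norm (e - t *\<^sub>C s))\<^sup>2" using min[of t] by (simp add: power_mono)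
  ultimately have "(cmod a)\<^sup>2 / n \<le> 0" by simp
  hence "(cmod a)\<^sup>2 \<le> 0" using n0 by (simp add: divide_le_0_iff)
  thus ?thesis unfolding a_def by simp
qed

lemma projection:
  assumes S: "csubspace S"
  shows "\<exists>p\<in>closure S. \<forall>s\<in>S. cinner s (f - p) = (0::complex)"
proof -
  define d where "d = Inf ((\<lambda>s. norm (f - s)) ` S)"
  have ne: "(\<lambda>s. norm (f - s)) ` S \<noteq> {}" using csub_0[OF S] by auto
  have bdd: "bdd_below ((\<lambda>s. norm (f - s)) ` S)" by (rule bdd_belowI[of _ 0]) auto
  have dle: "d \<le> norm (f - s)" if "s \<in> S" for s
    unfolding d_def using bdd that by (auto intro: cInf_lower)
  have d0: "0 \<le> d" unfolding d_def using ne by (intro cInf_greatest) auto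
  have "\<exists>s\<in>S. norm (f - s) < d + 1 / (real n + 1)" for n
  proof -
    have "Inf ((\<lambda>s. norm (f - s)) ` S) < d + 1 / (real n + 1)" unfolding d_def[symmetric]
      by (simp add: add_pos_pos)
    from cInf_lessD[OF ne this] show ?thesis by auto
  qed
  then obtain a where aS: "\<And>n. a n \<in> S" and al: "\<And>n. norm (f - a n) < d + 1 / (real n + 1)"
    by metis
  define e where "e n = 1 / (real n + 1)" for n
  have e0: "0 < e n" "e n \<le> 1" for n by (auto simp: e_def)
  have sqb: "(norm (f - a n))\<^sup>2 \<le> d\<^sup>2 + (2 * d + 1) * e n" for n
  proof -
    have "(norm (f - a n))\<^sup>2 \<le> (d + e n)\<^sup>2"
      using al[of n] d0 e0[of n] by (intro power_mono) (auto simp: e_def)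
    also have "\<dots> = d\<^sup>2 + 2 * d * e n + e n * e n" by (simp add: power2_eq_square algebra_simps)
    also have "e n * e n \<le> e n" using e0[of n] by (simp add: mult_le_one mult_left_le_one_le)
    finally show ?thesis by (simp add: algebra_simps)
  qed
  have pb: "(norm (a m - a n))\<^sup>2 \<le> 2 * (2 * d + 1) * (e m + e n)" for m n
  proof -
    define u where "u = f - a m"
    define v where "v = f - a n"
    have mid: "(1/2::real) *\<^sub>R (a m + a n) \<in> S" using aS S by (simp add: csub_add csub_scaleR)
    have "u + v = 2 *\<^sub>R (f - (1/2::real) *\<^sub>R (a m + a n))" unfolding u_def v_def
      by (simp add: algebra_simps scaleR_2)
    hence "norm (u + v) = 2 * norm (f - (1/2::real) *\<^sub>R (a m + a n))" by simp
    hence "2 * d \<le> norm (u + v)" using dle[OF mid] by simp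
    hence "(2 * d)\<^sup>2 \<le> (norm (u + v))\<^sup>2" using d0 by (intro power_mono) auto
    moreover have "u - v = a n - a m" by (simp add: u_def v_def)
    moreover have "norm (a n - a m) = norm (a m - a n)" by (rule norm_minus_commute)
    ultimately have "(norm (a m - a n))\<^sup>2 \<le> 2 * (norm u)\<^sup>2 + 2 * (norm v)\<^sup>2 - 4 * d\<^sup>2"
      using parallelogram[of u v] by (simp add: power2_eq_square)
    thus ?thesis using sqb[of m] sqb[of n] unfolding u_def v_def by (simp add: algebra_simps)
  qed
  have "Cauchy a"
  proof (rule metric_CauchyI)
    fix \<epsilon> :: real assume ep: "\<epsilon> > 0"
    define C where "C = 4 * (2 * d + 1)"
    have C0: "C > 0" using d0 by (simp add: C_def)
    obtain M :: nat where M: "real M > C / \<epsilon>\<^sup>2" using reals_Archimedean2 by blast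
    show "\<exists>M. \<forall>m\<ge>M. \<forall>n\<ge>M. dist (a m) (a n) < \<epsilon>"
    proof (intro exI allI impI)
      fix m n assume mM: "M \<le> m" and nM: "M \<le> n"
      have em: "e m \<le> 1 / (real M + 1)" "e n \<le> 1 / (real M + 1)" using mM nM
        by (auto simp: e_def intro!: divide_left_mono)
      have "(norm (a m - a n))\<^sup>2 \<le> 2 * (2 * d + 1) * (e m + e n)" by (rule pb)
      also have "\<dots> \<le> 2 * (2 * d + 1) * (2 / (real M + 1))"
        using em d0 by (intro mult_left_mono) auto
      also have "\<dots> = C / (real M + 1)" by (simp add: C_def)
      also have "\<dots> < \<epsilon>\<^sup>2"
      proof -
        have "C < \<epsilon>\<^sup>2 * real M" using M ep by (simp add: field_simps)
        also have "\<dots> \<le> \<epsilon>\<^sup>2 * (real M + 1)" using ep by simp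
        finally show ?thesis by (simp add: field_simps)
      qed
      finally have "(norm (a m - a n))\<^sup>2 < \<epsilon>\<^sup>2" .
      hence "norm (a m - a n) < \<epsilon>" using ep by (smt (verit) power_mono norm_ge_zero)
      thus "dist (a m) (a n) < \<epsilon>" by (simp add: dist_norm)
    qed
  qed
  then obtain p where ap: "a \<longlonglongrightarrow> p" using Cauchy_convergent_iff convergent_def by blast
  have pS: "p \<in> closure S" using aS ap by (auto simp: closure_sequential)
  have etend: "e \<longlonglongrightarrow> 0" unfolding e_def using LIMSEQ_inverse_real_of_nat
    by (simp add: inverse_eq_divide add.commute)
  have up: "norm (f - p) \<le> d"
  proof -
    have "(\<lambda>n. norm (f - a n)) \<longlonglongrightarrow> norm (f - p)" by (intro tendsto_intros ap)
    moreover have "(\<lambda>n. d + e n) \<longlonglongrightarrow> d + 0" by (intro tendsto_intros etend)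
    ultimately show ?thesis using al unfolding e_def[symmetric]
      by (auto intro: LIMSEQ_le less_imp_le)
  qed
  have low: "d \<le> norm (f - p - t *\<^sub>C s)" if s: "s \<in> S" for s t
  proof -
    have "(\<lambda>n. norm (f - (a n + t *\<^sub>C s))) \<longlonglongrightarrow> norm (f - (p + t *\<^sub>C s))" by (intro tendsto_intros ap)
    moreover have "d \<le> norm (f - (a n + t *\<^sub>C s))" for n
      using aS s S by (intro dle csub_add csub_scaleC) auto
    ultimately have "d \<le> norm (f - (p + t *\<^sub>C s))" by (intro LIMSEQ_le_const) auto
    thus ?thesis by (simp add: algebra_simps)
  qed
  have "\<forall>s\<in>S. cinner s (f - p) = 0"
    using orth_from_min order_trans[OF up low] by blast
  thus ?thesis using pS by blast
qed



lemma sa_props: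
  assumes "self_adjoint_op D B"
  shows "csubspace D" "closure D = UNIV" "clinear_on D B"
    "\<And>x y. x \<in> D \<Longrightarrow> y \<in> D \<Longrightarrow> cinner (B x) y = cinner x (B y)" "adj_dom D B \<subseteq> D"
  using assms unfolding self_adjoint_op_def by auto

lemma clin_on:
  assumes "clinear_on D f" "csubspace D" "x \<in> D" "y \<in> D"
  shows "f (x + y) = f x + f y" "f (a *\<^sub>C x) = a *\<^sub>C f x" "f (x - y) = f x - f (y::'a::chilbert)" "f 0 = 0"
proof -
  show "f (x + y) = f x + f y" "f (a *\<^sub>C x) = a *\<^sub>C f x" using assms unfolding clinear_on_def by auto
  have "(-1) *\<^sub>C y \<in> D" using assms by (simp add: csub_scaleC)
  hence "f (x + (-1) *\<^sub>C y) = f x + (-1) *\<^sub>C f y" using assms unfolding clinear_on_def by auto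
  thus "f (x - y) = f x - f y" by (simp add: scaleC_minus_left)
  show "f 0 = 0" using assms(1,2) unfolding clinear_on_def csubspace_def
    by (metis scaleC_zero_left)
qed

lemma sa_bij:
  fixes B C :: "'a::chilbert \<Rightarrow> 'a"
  assumes Bsa: "self_adjoint_op D B" and Cb: "cbounded C" and dpos: "\<delta> > 0"
    and Cge: "\<forall>x. cinner x (C x) \<in> \<real> \<and> \<delta> * (norm x)\<^sup>2 \<le> Re (cinner x (C x))"
  shows "bij_betw (\<lambda>x. B x + \<i> *\<^sub>C C x) D UNIV"
    and "\<forall>u\<in>D. \<delta> * norm u \<le> norm (B u + \<i> *\<^sub>C C u)"
    and "clinear_on D (\<lambda>x. B x + \<i> *\<^sub>C C x)"
proof -
  define A where "A x = B x + \<i> *\<^sub>C C x" for x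
  note Bp = sa_props[OF Bsa]
  have Cl: "clinear_on UNIV C" using Cb by (rule cbounded_lin)
  have Csym: "cinner (C x) y = cinner x (C y)" for x y
    using herm_sym[OF Cl] Cge by blast
  show Alin: "clinear_on D (\<lambda>x. B x + \<i> *\<^sub>C C x)"
    using Bp(3) unfolding clinear_on_def
    by (simp add: clinear_UNIV[OF Cl] scaleC_add_right scaleC_scaleC mult.commute)
  have Alin': "clinear_on D A" using Alin by (simp add: A_def[abs_def])
  have ImA: "Im (cinner u (A u)) = Re (cinner u (C u))" if "u \<in> D" for u
  proof -
    have "cinner u (B u) = cnj (cinner u (B u))" using Bp(4)[OF that that] by (metis cinner_commute)
    hence "Im (cinner u (B u)) = 0" by (metis Reals_cnj_iff complex_is_Real_iff)
    thus ?thesis by (simp add: A_def cinner_add_right cinner_scaleC_right)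
  qed
  have low: "\<delta> * norm u \<le> norm (A u)" if "u \<in> D" for u
  proof -
    have "\<delta> * (norm u)\<^sup>2 \<le> Im (cinner u (A u))" using ImA[OF that] Cge by simp
    also have "\<dots> \<le> cmod (cinner u (A u))" using abs_Im_le_cmod[of "cinner u (A u)"] by linarith
    also have "\<dots> \<le> norm u * norm (A u)" by (rule cauchy_schwarz)
    finally have "norm u * (\<delta> * norm u) \<le> norm u * norm (A u)" by (simp add: power2_eq_square mult_ac)
    thus ?thesis by (cases "norm u = 0") (auto simp: mult_le_cancel_left dpos)
  qed
  thus "\<forall>u\<in>D. \<delta> * norm u \<le> norm (B u + \<i> *\<^sub>C C u)" by (simp add: A_def)
  have inj: "inj_on A D"
  proof (rule inj_onI)
    fix x y assume xy: "x \<in> D" "y \<in> D" "A x = A y"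
    hence "A (x - y) = 0" using clin_on(3)[OF Alin' Bp(1) xy(1,2)] by simp
    hence "\<delta> * norm (x - y) \<le> 0" using low[of "x - y"] csub_diff[OF Bp(1) xy(1,2)] by simp
    thus "x = y" using dpos by (simp add: mult_le_0_iff)
  qed
  have Ssub: "csubspace (A ` D)"
    unfolding csubspace_def
  proof (intro conjI ballI allI)
    show "0 \<in> A ` D" using clin_on(4)[OF Alin' Bp(1), of 0 0] csub_0[OF Bp(1)] by (metis image_eqI)
    fix x y assume "x \<in> A ` D" "y \<in> A ` D"
    then obtain u v where "u \<in> D" "v \<in> D" "x = A u" "y = A v" by blast
    thus "x + y \<in> A ` D" using clin_on(1)[OF Alin' Bp(1)] csub_add[OF Bp(1)] by (metis image_eqI)
  next
    fix a x assume "x \<in> A ` D"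
    then obtain u where "u \<in> D" "x = A u" by blast
    thus "a *\<^sub>C x \<in> A ` D" using clin_on(2)[OF Alin' Bp(1)] csub_scaleC[OF Bp(1)] by (metis image_eqI)
  qed
  have closedS: "p \<in> A ` D" if p: "p \<in> closure (A ` D)" for p
  proof -
    obtain y where yS: "\<And>n. y n \<in> A ` D" and yp: "y \<longlonglongrightarrow> p"
      using p by (auto simp: closure_sequential)
    have "\<forall>n. \<exists>v. v \<in> D \<and> y n = A v" using yS by blast
    then obtain u where "\<forall>n. u n \<in> D \<and> y n = A (u n)" by metis
    hence uD: "\<And>n. u n \<in> D" and yu: "\<And>n. y n = A (u n)" by auto
    have "Cauchy u"
    proof (rule metric_CauchyI)
      fix \<epsilon> :: real assume ep: "\<epsilon> > 0"
      have "Cauchy y" using yp by (rule LIMSEQ_imp_Cauchy)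
      then obtain M where M: "\<forall>m\<ge>M. \<forall>n\<ge>M. dist (y m) (y n) < \<delta> * \<epsilon>"
        using metric_CauchyD dpos ep by (metis mult_pos_pos)
      show "\<exists>M. \<forall>m\<ge>M. \<forall>n\<ge>M. dist (u m) (u n) < \<epsilon>"
      proof (intro exI allI impI)
        fix m n assume "M \<le> m" "M \<le> n"
        hence "norm (y m - y n) < \<delta> * \<epsilon>" using M by (simp add: dist_norm)
        moreover have "y m - y n = A (u m - u n)" using clin_on(3)[OF Alin' Bp(1) uD uD] yu by simp
        moreover have "\<delta> * norm (u m - u n) \<le> norm (A (u m - u n))"
          using low csub_diff[OF Bp(1) uD uD] by blast
        ultimately have "\<delta> * norm (u m - u n) < \<delta> * \<epsilon>" by simp
        thus "dist (u m) (u n) < \<epsilon>" using dpos by (simp add: dist_norm)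
      qed
    qed
    then obtain w where uw: "u \<longlonglongrightarrow> w" using Cauchy_convergent_iff convergent_def by blast
    define g where "g = p - \<i> *\<^sub>C C w"
    have Cw: "(\<lambda>n. C (u n)) \<longlonglongrightarrow> C w" by (rule bounded_linear.tendsto[OF cbounded_bl[OF Cb] uw])
    have Bu: "(\<lambda>n. B (u n)) \<longlonglongrightarrow> g"
    proof -
      have "(\<lambda>n. y n - \<i> *\<^sub>C C (u n)) \<longlonglongrightarrow> p - \<i> *\<^sub>C C w"
        by (intro tendsto_diff yp bounded_linear.tendsto[OF bl_scaleC] Cw)
      moreover have "y n - \<i> *\<^sub>C C (u n) = B (u n)" for n by (simp add: yu A_def)
      ultimately show ?thesis by (simp add: g_def)
    qed
    have adj: "cinner w (B x) = cinner g x" if x: "x \<in> D" for x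
    proof -
      have "(\<lambda>n. cinner (u n) (B x)) \<longlonglongrightarrow> cinner w (B x)"
        by (rule bounded_linear.tendsto[OF bl_cinner_left uw])
      moreover have "(\<lambda>n. cinner (B (u n)) x) \<longlonglongrightarrow> cinner g x"
        by (rule bounded_linear.tendsto[OF bl_cinner_left Bu])
      moreover have "cinner (u n) (B x) = cinner (B (u n)) x" for n using Bp(4)[OF uD x] by simp
      ultimately show ?thesis using LIMSEQ_unique by force
    qed
    hence wD: "w \<in> D" using Bp(5) unfolding adj_dom_def by blast
    have "B w - g = 0"
    proof (rule cinner_dense_zero[OF Bp(2)], intro ballI)
      fix x assume x: "x \<in> D"
      show "cinner (B w - g) x = 0" using adj[OF x] Bp(4)[OF wD x] by (simp add: cinner_diff_left)
    qed
    hence "A w = p" by (simp add: A_def g_def)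
    thus ?thesis using wD by blast
  qed
  have surj: "f \<in> A ` D" for f
  proof -
    obtain p where pS: "p \<in> closure (A ` D)" and orth: "\<forall>s\<in>A ` D. cinner s (f - p) = 0"
      using projection[OF Ssub] by blast
    define e where "e = f - p"
    have "cinner e (B x) = cinner (\<i> *\<^sub>C C e) x" if x: "x \<in> D" for x
    proof -
      have "cinner (A x) e = 0" using orth x by (simp add: e_def)
      hence "cinner (B x) e = \<i> * cinner x (C e)"
        by (simp add: A_def cinner_add_left cinner_scaleC_left Csym)
      hence "cinner e (B x) = cnj (\<i> * cinner x (C e))" by (metis cinner_commute)
      thus ?thesis by (simp add: cinner_scaleC_left cinner_commute[of x])
    qed
    hence eD: "e \<in> D" using Bp(5) unfolding adj_dom_def by blast
    have "cinner (A e) e = 0" using orth eD by (simp add: e_def)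
    hence "cinner e (A e) = 0" by (metis cinner_commute complex_cnj_zero)
    hence "Re (cinner e (C e)) = 0" using ImA[OF eD] by simp
    hence "\<delta> * (norm e)\<^sup>2 \<le> 0" using Cge by metis
    hence "e = 0" using dpos by (simp add: mult_le_0_iff)
    thus ?thesis using closedS[OF pS] by (simp add: e_def)
  qed
  show "bij_betw (\<lambda>x. B x + \<i> *\<^sub>C C x) D UNIV"
    unfolding bij_betw_def using inj surj by (auto simp: A_def[abs_def])
qed



lemma orth_compl_csub: "csubspace (orth_compl (S::'a::chilbert set))"
  unfolding csubspace_def orth_compl_def by (auto simp: cinner_add_right cinner_scaleC_right)

lemma orth_compl_closed: "closed (orth_compl (S::'a::chilbert set))"
proof -
  have "orth_compl S = (\<Inter>y\<in>S. {x. cinner y x = 0})" unfolding orth_compl_def by auto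
  moreover have "closed {x. cinner y x = 0}" for y :: 'a
    using bounded_linear.continuous_on[OF bl_cinner_right, of UNIV "\<lambda>x. x" y]
    by (intro closed_Collect_eq) (auto intro: continuous_on_const continuous_on_id)
  ultimately show ?thesis by auto
qed

lemma ker_csub: "clinear_on UNIV V \<Longrightarrow> csubspace (ker (V::'a::chilbert\<Rightarrow>'a))"
  unfolding csubspace_def ker_def by (auto simp: clinear_UNIV clinear_UNIV2)

lemma ker_closed: "cbounded V \<Longrightarrow> closed (ker (V::'a::chilbert\<Rightarrow>'a))"
proof -
  assume V: "cbounded V"
  have "continuous_on UNIV V" using bounded_linear.continuous_on[OF cbounded_bl[OF V], of UNIV "\<lambda>x. x"]
    by (simp add: continuous_on_id)
  thus ?thesis unfolding ker_def by (intro closed_Collect_eq) (auto intro: continuous_on_const)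
qed

lemma shifted:
  fixes B C V :: "'a::chilbert \<Rightarrow> 'a"
  assumes Bsa: "self_adjoint_op D B" and Cb: "cbounded C" and dpos: "\<delta> > 0"
    and Cge: "\<forall>x. cinner x (C x) \<in> \<real> \<and> \<delta> * (norm x)\<^sup>2 \<le> Re (cinner x (C x))"
    and Vb: "cbounded V" and Vn: "nonneg_op V" and xi: "Im \<xi> \<le> 0"
  shows "bij_betw (\<lambda>x. (B x + \<i> *\<^sub>C C x) - \<xi> *\<^sub>C V x) D UNIV"
    and "\<forall>u\<in>D. \<delta> * norm u \<le> norm ((B u + \<i> *\<^sub>C C u) - \<xi> *\<^sub>C V u)"
    and "clinear_on D (\<lambda>x. (B x + \<i> *\<^sub>C C x) - \<xi> *\<^sub>C V x)"
proof -
  define B' where "B' x = B x - complex_of_real (Re \<xi>) *\<^sub>C V x" for x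
  define C' where "C' x = C x - complex_of_real (Im \<xi>) *\<^sub>C V x" for x
  note Bp = sa_props[OF Bsa]
  have Vl: "clinear_on UNIV V" using Vb by (rule cbounded_lin)
  have Cl: "clinear_on UNIV C" using Cb by (rule cbounded_lin)
  have Vsym: "cinner (V x) y = cinner x (V y)" for x y by (rule herm_sym[OF Vl nonneg_herm[OF Vn]])
  have eq: "(B x + \<i> *\<^sub>C C x) - \<xi> *\<^sub>C V x = B' x + \<i> *\<^sub>C C' x" for x
  proof -
    have "\<xi> = complex_of_real (Re \<xi>) + \<i> * complex_of_real (Im \<xi>)" by (simp add: complex_eq_iff)
    hence "\<xi> *\<^sub>C V x = complex_of_real (Re \<xi>) *\<^sub>C V x + \<i> *\<^sub>C (complex_of_real (Im \<xi>) *\<^sub>C V x)"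
      by (metis scaleC_add_left scaleC_scaleC)
    thus ?thesis by (simp add: B'_def C'_def scaleC_diff_right algebra_simps)
  qed
  have B'sa: "self_adjoint_op D B'"
    unfolding self_adjoint_op_def
  proof (intro conjI ballI)
    show "csubspace D" "closure D = UNIV" using Bp by auto
    show "clinear_on D B'" using Bp(3) unfolding clinear_on_def B'_def
      by (simp add: clinear_UNIV[OF Vl] scaleC_diff_right scaleC_scaleR_comm scaleR_add_right)
    fix x y assume "x \<in> D" "y \<in> D"
    thus "cinner (B' x) y = cinner x (B' y)"
      by (simp add: B'_def cinner_diff_left cinner_diff_right cinner_scaleR_left cinner_scaleR_right Bp(4) Vsym)
  next
    show "adj_dom D B' \<subseteq> D"
    proof
      fix y assume "y \<in> adj_dom D B'"
      then obtain z where z: "\<forall>x\<in>D. cinner y (B' x) = cinner z x" unfolding adj_dom_def by blast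
      have "\<forall>x\<in>D. cinner y (B x) = cinner (z + complex_of_real (Re \<xi>) *\<^sub>C V y) x"
        using z by (simp add: B'_def cinner_diff_right cinner_add_left cinner_scaleR_left cinner_scaleR_right Vsym algebra_simps)
      hence "y \<in> adj_dom D B" unfolding adj_dom_def by blast
      thus "y \<in> D" using Bp(5) by blast
    qed
  qed
  have C'b: "cbounded C'"
  proof -
    obtain K1 where "\<And>x. norm (C x) \<le> K1 * norm x" using cbounded_bound[OF Cb] by blast
    moreover obtain K2 where "\<And>x. norm (V x) \<le> K2 * norm x" using cbounded_bound[OF Vb] by blast
    ultimately have "norm (C' x) \<le> (K1 + \<bar>Im \<xi>\<bar> * K2) * norm x" for x
    proof -
      assume a: "\<And>x. norm (C x) \<le> K1 * norm x" "\<And>x. norm (V x) \<le> K2 * norm x"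
      have "norm (C' x) \<le> norm (C x) + norm (complex_of_real (Im \<xi>) *\<^sub>C V x)"
        unfolding C'_def by (rule norm_triangle_ineq4)
      also have "\<dots> \<le> K1 * norm x + \<bar>Im \<xi>\<bar> * (K2 * norm x)"
        using a by (intro add_mono) (auto simp: norm_scaleC intro: mult_left_mono)
      finally show ?thesis by (simp add: algebra_simps)
    qed
    moreover have "clinear_on UNIV C'" unfolding clinear_on_def C'_def
      by (simp add: clinear_UNIV[OF Vl] clinear_UNIV[OF Cl] scaleC_add_right scaleC_diff_right scaleC_scaleR_comm scaleR_add_right)
    ultimately show ?thesis unfolding cbounded_def by blast
  qed
  have C'ge: "\<forall>x. cinner x (C' x) \<in> \<real> \<and> \<delta> * (norm x)\<^sup>2 \<le> Re (cinner x (C' x))"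
  proof
    fix x
    have e: "cinner x (C' x) = cinner x (C x) - complex_of_real (Im \<xi>) * cinner x (V x)"
      by (simp add: C'_def cinner_diff_right cinner_scaleR_right)
    have "cinner x (V x) \<in> \<real>" "0 \<le> Re (cinner x (V x))" using Vn by (auto simp: nonneg_op_def)
    moreover have "cinner x (C x) \<in> \<real>" "\<delta> * (norm x)\<^sup>2 \<le> Re (cinner x (C x))" using Cge by auto
    moreover have "0 \<le> - Im \<xi> * Re (cinner x (V x))" using xi calculation(2) by (simp add: mult_nonpos_nonneg)
    ultimately show "cinner x (C' x) \<in> \<real> \<and> \<delta> * (norm x)\<^sup>2 \<le> Re (cinner x (C' x))"
      unfolding e by (auto simp: complex_is_Real_iff)
  qed
  note r = sa_bij[OF B'sa C'b dpos C'ge]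
  show "bij_betw (\<lambda>x. (B x + \<i> *\<^sub>C C x) - \<xi> *\<^sub>C V x) D UNIV" using r(1) by (simp add: eq)
  show "\<forall>u\<in>D. \<delta> * norm u \<le> norm ((B u + \<i> *\<^sub>C C u) - \<xi> *\<^sub>C V u)" using r(2) by (simp add: eq)
  show "clinear_on D (\<lambda>x. (B x + \<i> *\<^sub>C C x) - \<xi> *\<^sub>C V x)" using r(3) by (simp add: eq)
qed



locale bs =
  fixes B C V :: "'h::chilbert \<Rightarrow> 'h" and D :: "'h set" and \<delta> :: real
  assumes B_sa: "self_adjoint_op D B"
    and C_bdd: "cbounded C"
    and delta_pos: "\<delta> > 0"
    and C_ge: "\<forall>x. cinner x (C x) \<in> \<real> \<and> \<delta> * (norm x)\<^sup>2 \<le> Re (cinner x (C x))"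
    and V_bdd: "cbounded V"
    and V_nonneg: "nonneg_op V"
begin

definition Q where "Q = op_sqrt V"
definition Ax :: "complex \<Rightarrow> 'h \<Rightarrow> 'h" where "Ax \<xi> x = (B x + \<i> *\<^sub>C C x) - \<xi> *\<^sub>C V x"
definition Ai where "Ai \<xi> y = inv_into D (Ax \<xi>) y"
definition G where "G \<xi> y = Q (Ai \<xi> (Q y))"
definition M where "M = orth_compl (ker V)"
definition T where "T = inv_into M (G 0)"

lemma Bp: "csubspace D" "closure D = UNIV" "clinear_on D B"
    "\<And>x y. x \<in> D \<Longrightarrow> y \<in> D \<Longrightarrow> cinner (B x) y = cinner x (B y)" "adj_dom D B \<subseteq> D"
  using sa_props[OF B_sa] by auto

lemma Qp: "cbounded Q" "nonneg_op Q" "\<And>x. Q (Q x) = V x"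
  using op_sqrt_props[OF V_bdd V_nonneg] unfolding Q_def by auto

lemma Ql: "clinear_on UNIV Q" using Qp(1) by (rule cbounded_lin)
lemma Vl: "clinear_on UNIV V" using V_bdd by (rule cbounded_lin)
lemma Cl: "clinear_on UNIV C" using C_bdd by (rule cbounded_lin)
lemma Qsym: "cinner (Q x) y = cinner x (Q y)" by (rule herm_sym[OF Ql nonneg_herm[OF Qp(2)]])
lemma Vsym: "cinner (V x) y = cinner x (V y)" by (rule herm_sym[OF Vl nonneg_herm[OF V_nonneg]])
lemma Q0[simp]: "Q 0 = 0" by (rule clinear_UNIV2(1)[OF Ql])

lemma Q_zero_iff: "Q x = 0 \<longleftrightarrow> V x = 0"
proof
  assume "Q x = 0" thus "V x = 0" using Qp(3)[of x] by simp
next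
  assume "V x = 0"
  hence "cinner (Q x) (Q x) = 0" using Qsym[of x "Q x"] Qp(3)[of x] by simp
  thus "Q x = 0" by (simp add: cinner_self_eq_0)
qed

lemma Q_in_M: "Q x \<in> M"
  unfolding M_def orth_compl_def ker_def
proof (intro CollectI ballI)
  fix y assume "y \<in> {x. V x = 0}"
  hence "Q y = 0" using Q_zero_iff by simp
  thus "cinner y (Q x) = 0" using Qsym[of y x] by simp
qed

lemma M_csub: "csubspace M" unfolding M_def by (rule orth_compl_csub)
lemma M_closed: "closed M" unfolding M_def by (rule orth_compl_closed)

lemma M_ker: "m \<in> M \<Longrightarrow> V m = 0 \<Longrightarrow> m = 0"
  unfolding M_def orth_compl_def ker_def by (auto simp: cinner_self_eq_0)


lemma Q_bound: obtains Kq where "Kq > 0" "\<And>x. norm (Q x) \<le> Kq * norm x"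
  using cbounded_bound[OF Qp(1)] by blast

context
  fixes \<xi> :: complex assumes xi: "Im \<xi> \<le> 0"
begin

lemma Ax_facts: "bij_betw (Ax \<xi>) D UNIV" "\<forall>u\<in>D. \<delta> * norm u \<le> norm (Ax \<xi> u)" "clinear_on D (Ax \<xi>)"
  using shifted[OF B_sa C_bdd delta_pos C_ge V_bdd V_nonneg xi] unfolding Ax_def[abs_def] by auto

lemma Ai_D: "Ai \<xi> y \<in> D"
  using Ax_facts(1) unfolding Ai_def bij_betw_def by (metis UNIV_I inv_into_into)

lemma Ax_Ai: "Ax \<xi> (Ai \<xi> y) = y"
  using Ax_facts(1) unfolding Ai_def bij_betw_def by (metis UNIV_I f_inv_into_f)

lemma Ai_Ax: "u \<in> D \<Longrightarrow> Ai \<xi> (Ax \<xi> u) = u"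
  using Ax_facts(1) unfolding Ai_def bij_betw_def by (metis inv_into_f_f)

lemma Ai_bound: "\<delta> * norm (Ai \<xi> y) \<le> norm y"
  using Ax_facts(2) Ai_D Ax_Ai by metis

lemma Ai_add: "Ai \<xi> (y + z) = Ai \<xi> y + Ai \<xi> z"
proof -
  have "Ax \<xi> (Ai \<xi> y + Ai \<xi> z) = y + z"
    using clin_on(1)[OF Ax_facts(3) Bp(1) Ai_D Ai_D] by (simp add: Ax_Ai)
  hence "Ai \<xi> (y + z) = Ai \<xi> (Ax \<xi> (Ai \<xi> y + Ai \<xi> z))" by simp
  also have "\<dots> = Ai \<xi> y + Ai \<xi> z" by (rule Ai_Ax) (rule csub_add[OF Bp(1) Ai_D Ai_D])
  finally show ?thesis .
qed

lemma Ai_scale: "Ai \<xi> (a *\<^sub>C y) = a *\<^sub>C Ai \<xi> y"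
proof -
  have "Ax \<xi> (a *\<^sub>C Ai \<xi> y) = a *\<^sub>C y"
    using clin_on(2)[OF Ax_facts(3) Bp(1) Ai_D Ai_D] by (simp add: Ax_Ai)
  hence "Ai \<xi> (a *\<^sub>C y) = Ai \<xi> (Ax \<xi> (a *\<^sub>C Ai \<xi> y))" by simp
  also have "\<dots> = a *\<^sub>C Ai \<xi> y" by (rule Ai_Ax) (rule csub_scaleC[OF Bp(1) Ai_D])
  finally show ?thesis .
qed

lemma Ai_0: "Ai \<xi> 0 = 0"
  using Ai_scale[of 0 0] by simp

end

lemma xi0: "Im (0::complex) \<le> 0" by simp

lemma Ax0: "Ax 0 x = B x + \<i> *\<^sub>C C x" by (simp add: Ax_def)

lemma Im_Ax0: "u \<in> D \<Longrightarrow> Im (cinner u (Ax 0 u)) = Re (cinner u (C u))"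
proof -
  assume u: "u \<in> D"
  have "cinner u (B u) = cnj (cinner u (B u))" using Bp(4)[OF u u] by (metis cinner_commute)
  hence "Im (cinner u (B u)) = 0" by (metis Reals_cnj_iff complex_is_Real_iff)
  thus ?thesis by (simp add: Ax0 cinner_add_right cinner_scaleC_right)
qed

lemma key_inner: "cinner (G 0 m) m = cinner (Ai 0 (Q m)) (Ax 0 (Ai 0 (Q m)))"
  unfolding G_def by (simp add: Qsym Ax_Ai[OF xi0])

lemma key_Im: "\<delta> * (norm (Ai 0 (Q m)))\<^sup>2 \<le> Im (cinner (G 0 m) m)"
  unfolding key_inner Im_Ax0[OF Ai_D[OF xi0]] using C_ge by blast

lemma G0_add: "G 0 (x + y) = G 0 x + G 0 y"
  unfolding G_def by (simp add: clinear_UNIV[OF Ql] Ai_add[OF xi0])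
lemma G0_scale: "G 0 (a *\<^sub>C x) = a *\<^sub>C G 0 x"
  unfolding G_def by (simp add: clinear_UNIV[OF Ql] Ai_scale[OF xi0])
lemma G0_lin: "clinear_on UNIV (G 0)" by (simp add: clinear_on_def G0_add G0_scale)

lemma range_sub: "range (G 0) \<subseteq> M" unfolding G_def using Q_in_M by auto

lemma range_csub: "csubspace (range (G 0))"
  unfolding csubspace_def
proof (intro conjI ballI allI)
  have "G 0 0 = 0" using clinear_UNIV2(1)[OF G0_lin] .
  thus "0 \<in> range (G 0)" by (metis rangeI)
  fix x y assume "x \<in> range (G 0)" "y \<in> range (G 0)"
  then obtain u v where "x = G 0 u" "y = G 0 v" by blast
  hence "x + y = G 0 (u + v)" using G0_add by simp
  thus "x + y \<in> range (G 0)" by blast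
next
  fix a x assume "x \<in> range (G 0)"
  then obtain u where "x = G 0 u" by blast
  hence "a *\<^sub>C x = G 0 (a *\<^sub>C u)" using G0_scale by simp
  thus "a *\<^sub>C x \<in> range (G 0)" by blast
qed

lemma range_eq: "range (G 0) = G 0 ` M"
proof
  show "G 0 ` M \<subseteq> range (G 0)" by auto
  show "range (G 0) \<subseteq> G 0 ` M"
  proof
    fix z assume "z \<in> range (G 0)"
    then obtain x where z: "z = G 0 x" by blast
    obtain p where pS: "p \<in> closure (ker V)" and orth: "\<forall>s\<in>ker V. cinner s (x - p) = 0"
      using projection[OF ker_csub[OF Vl]] by blast
    have pk: "p \<in> ker V" using pS closure_closed[OF ker_closed[OF V_bdd]] by simp
    hence "Q p = 0" using Q_zero_iff by (simp add: ker_def)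
    hence "G 0 p = 0" by (simp add: G_def Ai_0[OF xi0])
    hence "G 0 x = G 0 (x - p)" using clinear_UNIV2(3)[OF G0_lin, of x p] by simp
    moreover have "x - p \<in> M" using orth unfolding M_def orth_compl_def by blast
    ultimately show "z \<in> G 0 ` M" using z by blast
  qed
qed

lemma Ai0_zero: "Ai 0 (Q m) = 0 \<Longrightarrow> Q m = 0"
  using Ax_Ai[OF xi0, of "Q m"] clin_on(4)[OF Ax_facts(3)[OF xi0] Bp(1), of 0 0] csub_0[OF Bp(1)] by simp

lemma G0_inj: "inj_on (G 0) M"
proof (rule inj_onI)
  fix x y assume xy: "x \<in> M" "y \<in> M" "G 0 x = G 0 y"
  define w where "w = x - y"
  have wM: "w \<in> M" using csub_diff[OF M_csub xy(1,2)] by (simp add: w_def)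
  have "G 0 w = 0" using xy(3) clinear_UNIV2(3)[OF G0_lin] by (simp add: w_def)
  hence "\<delta> * (norm (Ai 0 (Q w)))\<^sup>2 \<le> 0" using key_Im[of w] by simp
  hence "Ai 0 (Q w) = 0" using delta_pos by (simp add: mult_le_0_iff)
  hence "V w = 0" using Ai0_zero Q_zero_iff by blast
  hence "w = 0" using M_ker wM by blast
  thus "x = y" by (simp add: w_def)
qed

lemma T_range: "x \<in> range (G 0) \<Longrightarrow> T x \<in> M \<and> G 0 (T x) = x"
  unfolding T_def using range_eq by (metis f_inv_into_f inv_into_into)

lemma T_G: "m \<in> M \<Longrightarrow> T (G 0 m) = m"
  unfolding T_def by (rule inv_into_f_f[OF G0_inj])

lemma T_add: "x \<in> range (G 0) \<Longrightarrow> y \<in> range (G 0) \<Longrightarrow> T (x + y) = T x + T y"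
proof -
  assume x: "x \<in> range (G 0)" and y: "y \<in> range (G 0)"
  have "G 0 (T x + T y) = x + y" using T_range[OF x] T_range[OF y] G0_add by simp
  hence "T (x + y) = T (G 0 (T x + T y))" by simp
  also have "\<dots> = T x + T y" using T_range[OF x] T_range[OF y] csub_add[OF M_csub] T_G by simp
  finally show ?thesis .
qed

lemma T_scale: "x \<in> range (G 0) \<Longrightarrow> T (a *\<^sub>C x) = a *\<^sub>C T x"
proof -
  assume x: "x \<in> range (G 0)"
  have "G 0 (a *\<^sub>C T x) = a *\<^sub>C x" using T_range[OF x] G0_scale by simp
  hence "T (a *\<^sub>C x) = T (G 0 (a *\<^sub>C T x))" by simp
  also have "\<dots> = a *\<^sub>C T x" using T_range[OF x] csub_scaleC[OF M_csub] T_G by simp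
  finally show ?thesis .
qed

lemma T_lin: "clinear_on (range (G 0)) T"
  unfolding clinear_on_def using T_add T_scale by blast

lemma T_Im: "x \<in> range (G 0) \<Longrightarrow> \<delta> * (norm (Ai 0 (Q (T x))))\<^sup>2 \<le> Im (cinner x (T x))"
  using key_Im[of "T x"] T_range[of x] by simp

lemma T_diss: "x \<in> range (G 0) \<Longrightarrow> 0 \<le> Im (cinner x (T x))"
  using T_Im[of x] delta_pos by (smt (verit) mult_nonneg_nonneg zero_le_power2)

lemma T_x_Q: "x \<in> range (G 0) \<Longrightarrow> x = Q (Ai 0 (Q (T x)))"
  using T_range[of x] by (simp add: G_def)

end


context bs begin

lemma T_diff: "x \<in> range (G 0) \<Longrightarrow> y \<in> range (G 0) \<Longrightarrow> T (x - y) = T x - T y"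
  using clin_on(3)[OF T_lin range_csub] by blast

lemma Ax_shift: "Ax 0 u = Ax \<xi> u + \<xi> *\<^sub>C V u" by (simp add: Ax_def)

lemma density: "M \<subseteq> closure (range (G 0))"
proof
  fix m assume m: "m \<in> M"
  obtain p where pS: "p \<in> closure (range (G 0))" and orth: "\<forall>s\<in>range (G 0). cinner s (m - p) = 0"
    using projection[OF range_csub] by blast
  have "closure (range (G 0)) \<subseteq> M" by (rule closure_minimal[OF range_sub M_closed])
  hence eM: "m - p \<in> M" using pS m csub_diff[OF M_csub] by blast
  have "cinner (G 0 (m - p)) (m - p) = 0" using orth by blast
  hence "\<delta> * (norm (Ai 0 (Q (m - p))))\<^sup>2 \<le> 0" using key_Im[of "m - p"] by simp
  hence "Ai 0 (Q (m - p)) = 0" using delta_pos by (simp add: mult_le_0_iff)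
  hence "V (m - p) = 0" using Ai0_zero Q_zero_iff by blast
  hence "m - p = 0" using M_ker eM by blast
  thus "m \<in> closure (range (G 0))" using pS by simp
qed

lemma diss: "dissipative_in M (range (G 0)) T"
  unfolding dissipative_in_def
  using range_csub range_sub density T_range T_lin T_diss by blast

context
  fixes \<xi> :: complex assumes xi: "Im \<xi> \<le> 0"
begin

lemma R1: "y \<in> M \<Longrightarrow> G \<xi> y \<in> range (G 0) \<and> T (G \<xi> y) - \<xi> *\<^sub>C G \<xi> y = y"
proof -
  assume y: "y \<in> M"
  define u where "u = Ai \<xi> (Q y)"
  have uD: "u \<in> D" unfolding u_def by (rule Ai_D[OF xi])
  have Au: "Ax \<xi> u = Q y" unfolding u_def by (rule Ax_Ai[OF xi])
  define z where "z = Q u"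
  have zG: "z = G \<xi> y" by (simp add: z_def u_def G_def)
  define w where "w = y + \<xi> *\<^sub>C z"
  have wM: "w \<in> M" unfolding w_def using y Q_in_M csub_add[OF M_csub] csub_scaleC[OF M_csub] z_def by blast
  have "Q w = Q y + \<xi> *\<^sub>C V u" by (simp add: w_def z_def clinear_UNIV[OF Ql] Qp(3))
  also have "\<dots> = Ax 0 u" using Ax_shift[of u \<xi>] Au by simp
  finally have "Ai 0 (Q w) = u" using Ai_Ax[OF xi0 uD] by simp
  hence Gw: "G 0 w = z" by (simp add: G_def z_def)
  hence "T z = w" using T_G[OF wM] by simp
  hence "T z - \<xi> *\<^sub>C z = y" by (simp add: w_def)
  thus ?thesis using Gw zG by (metis rangeI)
qed

lemma R2: "inj_on (\<lambda>x. T x - \<xi> *\<^sub>C x) (range (G 0))"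
proof (rule inj_onI)
  fix x1 x2 assume x1: "x1 \<in> range (G 0)" and x2: "x2 \<in> range (G 0)"
    and eq: "T x1 - \<xi> *\<^sub>C x1 = T x2 - \<xi> *\<^sub>C x2"
  define x where "x = x1 - x2"
  have xr: "x \<in> range (G 0)" unfolding x_def by (rule csub_diff[OF range_csub x1 x2])
  have "T x1 - T x2 = \<xi> *\<^sub>C x1 - \<xi> *\<^sub>C x2" using eq by (simp add: algebra_simps)
  hence "T x = \<xi> *\<^sub>C x" using T_diff[OF x1 x2] by (simp add: x_def scaleC_diff_right)
  hence "Im (cinner x (T x)) = Im \<xi> * (norm x)\<^sup>2" by (simp add: cinner_scaleC_right cinner_self_norm)
  also have "\<dots> \<le> 0" using xi by (simp add: mult_nonpos_nonneg)
  finally have "\<delta> * (norm (Ai 0 (Q (T x))))\<^sup>2 \<le> 0" using T_Im[OF xr] by linarith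
  hence "Ai 0 (Q (T x)) = 0" using delta_pos by (simp add: mult_le_0_iff)
  hence "x = 0" using T_x_Q[OF xr] by simp
  thus "x1 = x2" by (simp add: x_def)
qed

lemma R3: "bij_betw (\<lambda>x. T x - \<xi> *\<^sub>C x) (range (G 0)) M"
  unfolding bij_betw_def
proof (intro conjI R2 equalityI subsetI)
  fix y assume "y \<in> (\<lambda>x. T x - \<xi> *\<^sub>C x) ` range (G 0)"
  then obtain x where x: "x \<in> range (G 0)" and y: "y = T x - \<xi> *\<^sub>C x" by blast
  have "T x \<in> M" "x \<in> M" using T_range[OF x] range_sub x by auto
  thus "y \<in> M" using y csub_diff[OF M_csub] csub_scaleC[OF M_csub] by blast
next
  fix y assume "y \<in> M"
  hence "G \<xi> y \<in> range (G 0)" "y = T (G \<xi> y) - \<xi> *\<^sub>C G \<xi> y" using R1 by auto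
  thus "y \<in> (\<lambda>x. T x - \<xi> *\<^sub>C x) ` range (G 0)" by (rule rev_image_eqI)
qed

lemma R4: "y \<in> M \<Longrightarrow> inv_into (range (G 0)) (\<lambda>x. T x - \<xi> *\<^sub>C x) y = G \<xi> y"
proof -
  assume y: "y \<in> M"
  show ?thesis using R1[OF y] by (intro inv_into_f_eq[OF R2]) auto
qed

lemma R5: "\<exists>c. \<forall>y\<in>M. norm (inv_into (range (G 0)) (\<lambda>x. T x - \<xi> *\<^sub>C x) y) \<le> c * norm y"
proof -
  obtain Kq where Kq: "Kq > 0" "\<And>x. norm (Q x) \<le> Kq * norm x" using Q_bound by blast
  have "norm (G \<xi> y) \<le> (Kq * Kq / \<delta>) * norm y" for y
  proof -
    have "norm (G \<xi> y) \<le> Kq * norm (Ai \<xi> (Q y))" unfolding G_def by (rule Kq(2))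
    also have "norm (Ai \<xi> (Q y)) \<le> norm (Q y) / \<delta>"
      using Ai_bound[OF xi, of "Q y"] delta_pos by (simp add: pos_le_divide_eq mult.commute)
    also have "norm (Q y) \<le> Kq * norm y" by (rule Kq(2))
    finally show ?thesis using Kq(1) delta_pos by (simp add: mult_left_mono divide_right_mono mult_ac)
  qed
  thus ?thesis using R4 by metis
qed

end

lemma maxdiss: "max_dissipative_in M (range (G 0)) T"
  unfolding max_dissipative_in_def
proof (intro conjI diss allI impI)
  fix D' T' assume a: "dissipative_in M D' T' \<and> range (G 0) \<subseteq> D' \<and> (\<forall>x\<in>range (G 0). T' x = T x)"
  hence D': "csubspace D'" "D' \<subseteq> M" "\<forall>x\<in>D'. T' x \<in> M" "clinear_on D' T'" "\<forall>x\<in>D'. 0 \<le> Im (cinner x (T' x))"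
    unfolding dissipative_in_def by auto
  show "D' = range (G 0)"
  proof (rule equalityI[OF subsetI])
    fix x' assume x': "x' \<in> D'"
    define y where "y = T' x' - (- \<i>) *\<^sub>C x'"
    have yM: "y \<in> M" unfolding y_def using D' x' csub_diff[OF M_csub] csub_scaleC[OF M_csub] by blast
    have xi': "Im (- \<i>) \<le> 0" by simp
    define x where "x = G (- \<i>) y"
    have xr: "x \<in> range (G 0)" and Tx: "T x - (- \<i>) *\<^sub>C x = y" using R1[OF xi' yM] by (auto simp: x_def)
    have xD: "x \<in> D'" using xr a by blast
    define z where "z = x' - x"
    have zD: "z \<in> D'" unfolding z_def by (rule csub_diff[OF D'(1) x' xD])
    have "T' z = T' x' - T' x" unfolding z_def by (rule clin_on(3)[OF D'(4) D'(1) x' xD])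
    also have "T' x = T x" using a xr by blast
    finally have "T' z = T' x' - T x" .
    moreover have "T x = y + (- \<i>) *\<^sub>C x" using Tx by (simp add: algebra_simps)
    ultimately have "T' z = (- \<i>) *\<^sub>C x' - (- \<i>) *\<^sub>C x" by (simp add: y_def algebra_simps)
    hence "T' z = (- \<i>) *\<^sub>C z" by (simp add: z_def scaleC_diff_right)
    hence "Im (cinner z (T' z)) = - (norm z)\<^sup>2" by (simp add: cinner_scaleC_right cinner_self_norm)
    moreover have "0 \<le> Im (cinner z (T' z))" using D'(5) zD by blast
    ultimately have "(norm z)\<^sup>2 \<le> 0" by linarith
    hence "norm z = 0" by simp
    hence "x' = x" by (simp add: z_def)
    thus "x' \<in> range (G 0)" using xr by simp
  qed (use a in blast)
qed

end

theorem lemmaB1: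
  fixes B C V :: "'h::chilbert \<Rightarrow> 'h" and D :: "'h set" and \<delta> :: real
  assumes separable: "\<exists>S::'h set. countable S \<and> closure S = UNIV"
    and B_sa: "self_adjoint_op D B"
    and C_bdd: "cbounded C"
    and delta_pos: "\<delta> > 0"
    and C_ge: "\<forall>x. cinner x (C x) \<in> \<real> \<and> \<delta> * (norm x)\<^sup>2 \<le> Re (cinner x (C x))"
    and V_bdd: "cbounded V"
    and V_nonneg: "nonneg_op V"
  defines "A0 \<equiv> (\<lambda>x. B x + \<i> *\<^sub>C C x)"
    and "K \<equiv> (\<lambda>x. op_sqrt V (inv_into D (\<lambda>x. B x + \<i> *\<^sub>C C x) (op_sqrt V x)))"
    and "M \<equiv> orth_compl (ker V)"
  shows "inj_on K M \<and> max_dissipative_in M (range K) (inv_into M K) \<and>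
    (\<forall>\<xi>. Im \<xi> \<le> 0 \<longrightarrow>
       in_resolvent_in M (range K) (inv_into M K) \<xi> \<and>
       bij_betw (\<lambda>x. A0 x - \<xi> *\<^sub>C V x) D UNIV \<and>
       (\<forall>y\<in>M. inv_into (range K) (\<lambda>x. (inv_into M K) x - \<xi> *\<^sub>C x) y
               = op_sqrt V (inv_into D (\<lambda>x. A0 x - \<xi> *\<^sub>C V x) (op_sqrt V y))))"
proof -
  have M0: "M = orth_compl (ker V)" by (simp add: M_def)
  have bsI: "bs B C V D \<delta>" using B_sa C_bdd delta_pos C_ge V_bdd V_nonneg by unfold_locales
  interpret bs B C V D \<delta> by (rule bsI)
  have AxE: "(\<lambda>x. A0 x - \<xi> *\<^sub>C V x) = Ax \<xi>" for \<xi>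
    by (rule ext) (simp add: A0_def Ax_def)
  have Ax0E: "Ax 0 = (\<lambda>x. B x + \<i> *\<^sub>C C x)" by (rule ext) (simp add: Ax_def)
  have KE: "K = G 0"
    by (rule ext) (simp only: K_def G_def Ai_def Q_def Ax0E)
  have ME: "M = bs.M V" using M0 bs.M_def[OF bsI] by metis
  have TE: "inv_into (bs.M V) (G 0) = T" by (simp only: T_def)
  have GE: "op_sqrt V (inv_into D (Ax \<xi>) (op_sqrt V y)) = G \<xi> y" for \<xi> y
    by (simp only: G_def Ai_def Q_def)
  show ?thesis
    unfolding AxE KE ME TE GE in_resolvent_in_def
  proof (intro conjI allI impI G0_inj maxdiss)
    fix \<xi> :: complex assume xi: "Im \<xi> \<le> 0"
    show "bij_betw (\<lambda>x. T x - \<xi> *\<^sub>C x) (range (G 0)) (bs.M V)" by (rule R3[OF xi])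
    show "\<exists>c. \<forall>y\<in>bs.M V. norm (inv_into (range (G 0)) (\<lambda>x. T x - \<xi> *\<^sub>C x) y) \<le> c * norm y"
      by (rule R5[OF xi])
    show "bij_betw (Ax \<xi>) D UNIV" by (rule Ax_facts(1)[OF xi])
    show "\<forall>y\<in>bs.M V. inv_into (range (G 0)) (\<lambda>x. T x - \<xi> *\<^sub>C x) y = G \<xi> y"
      using R4[OF xi] by blast
  qed
qed



end
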